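(* Let $\Delta\in\mathbb F^{m\times m}$ be a connection matrix with column/row partition $J_0,\dots,J_b$. Let $\Delta^0,\dots,\Delta^m$ be produced by the Incremental Sweeping Algorithm (ISA) applied to $\Delta$ and $\widetilde\Delta^0,\dots,\widetilde\Delta^{m-1}$ by the Row Cancellation Algorithm (RCA) applied to $\Delta$. Then for every $r=1,\dots,m-1$, the set of positions marked as primary pivots at iteration $r$ is the same in both algorithms, and for every position $(i,j)$ marked as a primary pivot at some iteration $\le r$ one has $\Delta^r_{ij}=\widetilde\Delta^r_{ij}$.
   Context: Throughout, $\mathbb F$ is a field and $m\ge1$. $U^{pq}$ is the $m\times m$ matrix whose only nonzero entry is a $1$ in position $(p,q)$. Superscripts on matrices are indices, not powers. A connection matrix (over $\mathbb F$) is a matrix $\Delta\in\mathbb F^{m\times m}$ together with a partition $\{1,\dots,m\}=J_0\sqcup\cdots\sqcup J_b$ (the column/row partition; the $J_k$ need not consist of consecutive integers) such that $\Delta$ is upper triangular, $\Delta\Delta=0$, and $\Delta_{ij}=0$ unless $i<j$ and $(i,j)\in\bigcup_{k=1}^bJ_{k-1}\times J_k$. For $1\le r\le m-1$ the $r$-th diagonal is $\{(j-r,j):r<j\le m\}$. Incremental Sweeping Algorithm (ISA) applied to a connection matrix $\Delta$: set $\Delta^0=\Delta^1=\Delta$. For $r=1,\dots,m-1$ in turn: (Markup) for every position $(j-r,j)$ on the $r$-th diagonal with $\Delta^r_{j-r,j}\ne0$ such that no position in column $j$ was marked as a primary pivot at an earlier iteration: if some position $(j-r,p)$ of row $j-r$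 was marked as a primary pivot at an earlier iteration, mark $(j-r,j)$ as a change-of-basis pivot of iteration $r$; otherwise mark $(j-r,j)$ permanently as a primary pivot (marked at iteration $r$). (Update) Let $T^r=I-\sum \frac{\Delta^r_{j-r,j}}{\Delta^r_{j-r,p}}U^{pj}$, the sum running over all change-of-basis pivots $(j-r,j)$ of iteration $r$, where $(j-r,p)$ is the primary pivot position in row $j-r$; set $\Delta^{r+1}=(T^r)^{-1}\Delta^rT^r$. Row Cancellation Algorithm (RCA) applied to a connection matrix $\Delta$: set $\widetilde\Delta^0=\widetilde\Delta^1=\Delta$. For $r=1,\dots,m-1$ in turn: (Markup) mark permanently as a primary pivot (marked at iteration $r$) every position $(j-r,j)$ on the $r$-th diagonal with $\widetilde\Delta^r_{j-r,j}\ne0$ such that no position of column $j$ was marked as a primary pivot at an earlier iteration. (Update, only for $r\le m-2$) If no position was marked at iteration $r$, put $\widetilde T^r=I$; otherwise let $j_1<\cdots<j_t$ be the columns of the positions marked at iteration $r$, let $\widetilde T^{r,s}=I-\sum_{q=j_s+1}^m\frac{\widetilde\Delta^r_{j_s-r,q}}{\widetilde\Delta^r_{j_s-r,j_s}}U^{j_sq}$ and $\widetilde T^r=\widetilde T^{r,1}\cdots\widetilde T^{r,t}$. Set $\widetilde\Delta^{r+1}=(\widetilde T^r)^{-1}\widetilde\Delta^r\widetilde T^r$. *)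

theory Defs
  imports Main
begin

text \<open>Matrices in F^{m x m} are represented as functions nat => nat => 'a,
  with 1-based indices 1..m (entries outside this range are irrelevant).\<close>

type_synonym 'a mtx = "nat \<Rightarrow> nat \<Rightarrow> 'a"

definition mid :: "nat \<Rightarrow> ('a::field) mtx" where
  "mid m = (\<lambda>a b. if a = b \<and> a \<in> {1..m} then 1 else 0)"

definition mzero :: "('a::field) mtx" where
  "mzero = (\<lambda>a b. 0)"

definition mmult :: "nat \<Rightarrow> ('a::field) mtx \<Rightarrow> 'a mtx \<Rightarrow> 'a mtx" where
  "mmult m A B = (\<lambda>i j. \<Sum>k\<in>{1..m}. A i k * B k j)"

definition Umat :: "nat \<Rightarrow> nat \<Rightarrow> ('a::field) mtx" where
  "Umat p q = (\<lambda>a b. if a = p \<and> b = q then 1 else 0)"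

definition msupp :: "nat \<Rightarrow> ('a::field) mtx \<Rightarrow> bool" where
  "msupp m S \<longleftrightarrow> (\<forall>a b. \<not> (a \<in> {1..m} \<and> b \<in> {1..m}) \<longrightarrow> S a b = 0)"

definition minv :: "nat \<Rightarrow> ('a::field) mtx \<Rightarrow> 'a mtx" where
  "minv m T = (SOME S. msupp m S \<and> mmult m S T = mid m \<and> mmult m T S = mid m)"

definition connection_matrix ::
    "nat \<Rightarrow> ('a::field) mtx \<Rightarrow> (nat \<Rightarrow> nat set) \<Rightarrow> nat \<Rightarrow> bool" where
  "connection_matrix m D J b \<longleftrightarrow>
     (\<Union>k\<in>{0..b}. J k) = {1..m} \<and>
     (\<forall>k\<in>{0..b}. J k \<noteq> {}) \<and>
     (\<forall>k\<in>{0..b}. \<forall>k'\<in>{0..b}. k \<noteq> k' \<longrightarrow> J k \<inter> J k' = {}) \<and>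
     (\<forall>i j. i > j \<longrightarrow> D i j = 0) \<and>
     mmult m D D = mzero \<and>
     (\<forall>i j. D i j \<noteq> 0 \<longrightarrow> i < j \<and> (\<exists>k\<in>{1..b}. i \<in> J (k - 1) \<and> j \<in> J k))"

text \<open>P k is the set of primary pivots marked at iteration k.\<close>
definition earlier :: "(nat \<Rightarrow> (nat \<times> nat) set) \<Rightarrow> nat \<Rightarrow> (nat \<times> nat) set" where
  "earlier P r = (\<Union>k\<in>{1..<r}. P k)"

definition cand :: "nat \<Rightarrow> nat \<Rightarrow> ('a::field) mtx \<Rightarrow> (nat \<Rightarrow> (nat \<times> nat) set) \<Rightarrow> (nat \<times> nat) set" where
  "cand m r D P = {(j - r, j) | j. r < j \<and> j \<le> m \<and> D (j - r) j \<noteq> 0 \<and>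
                     \<not> (\<exists>i. (i, j) \<in> earlier P r)}"

definition isa_cob :: "nat \<Rightarrow> nat \<Rightarrow> ('a::field) mtx \<Rightarrow> (nat \<Rightarrow> (nat \<times> nat) set) \<Rightarrow> (nat \<times> nat) set" where
  "isa_cob m r D P = {c \<in> cand m r D P. \<exists>p. (fst c, p) \<in> earlier P r}"

definition isa_prim :: "nat \<Rightarrow> nat \<Rightarrow> ('a::field) mtx \<Rightarrow> (nat \<Rightarrow> (nat \<times> nat) set) \<Rightarrow> (nat \<times> nat) set" where
  "isa_prim m r D P = cand m r D P - isa_cob m r D P"

definition ppcol :: "(nat \<Rightarrow> (nat \<times> nat) set) \<Rightarrow> nat \<Rightarrow> nat \<Rightarrow> nat" where
  "ppcol P r i = (THE p. (i, p) \<in> earlier P r)"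

definition isa_T :: "nat \<Rightarrow> nat \<Rightarrow> ('a::field) mtx \<Rightarrow> (nat \<Rightarrow> (nat \<times> nat) set) \<Rightarrow> 'a mtx" where
  "isa_T m r D P = (\<lambda>a b. mid m a b -
     (\<Sum>c\<in>isa_cob m r D P.
        (D (fst c) (snd c) / D (fst c) (ppcol P r (fst c))) * Umat (ppcol P r (fst c)) (snd c) a b))"

definition isa_step :: "nat \<Rightarrow> nat \<Rightarrow> ('a::field) mtx \<Rightarrow> (nat \<Rightarrow> (nat \<times> nat) set)
     \<Rightarrow> 'a mtx \<times> (nat \<Rightarrow> (nat \<times> nat) set)" where
  "isa_step m r D P =
     (let T = isa_T m r D P in
      (mmult m (mmult m (minv m T) D) T, P(r := isa_prim m r D P)))"

text \<open>isa m D r = (Delta^r, P) where P k is the set of primary pivots marked at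
  iteration k, for k < r (and empty for k >= r).\<close>
fun isa :: "nat \<Rightarrow> ('a::field) mtx \<Rightarrow> nat \<Rightarrow> 'a mtx \<times> (nat \<Rightarrow> (nat \<times> nat) set)" where
  "isa m D 0 = (D, \<lambda>_. {})"
| "isa m D (Suc 0) = (D, \<lambda>_. {})"
| "isa m D (Suc (Suc r)) = (case isa m D (Suc r) of (E, P) \<Rightarrow> isa_step m (Suc r) E P)"

definition rca_Ts :: "nat \<Rightarrow> nat \<Rightarrow> ('a::field) mtx \<Rightarrow> nat \<Rightarrow> 'a mtx" where
  "rca_Ts m r D js = (\<lambda>a b. mid m a b -
     (\<Sum>q\<in>{js+1..m}. (D (js - r) q / D (js - r) js) * Umat js q a b))"

definition rca_T :: "nat \<Rightarrow> nat \<Rightarrow> ('a::field) mtx \<Rightarrow> (nat \<Rightarrow> (nat \<times> nat) set) \<Rightarrow> 'a mtx" where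
  "rca_T m r D P =
     foldr (\<lambda>j A. mmult m (rca_Ts m r D j) A)
           (sorted_list_of_set (snd ` cand m r D P)) (mid m)"

definition rca_step :: "nat \<Rightarrow> nat \<Rightarrow> ('a::field) mtx \<Rightarrow> (nat \<Rightarrow> (nat \<times> nat) set)
     \<Rightarrow> 'a mtx \<times> (nat \<Rightarrow> (nat \<times> nat) set)" where
  "rca_step m r D P =
     (let T = rca_T m r D P in
      (if r \<le> m - 2 then mmult m (mmult m (minv m T) D) T else D,
       P(r := cand m r D P)))"

fun rca :: "nat \<Rightarrow> ('a::field) mtx \<Rightarrow> nat \<Rightarrow> 'a mtx \<times> (nat \<Rightarrow> (nat \<times> nat) set)" where
  "rca m D 0 = (D, \<lambda>_. {})"
| "rca m D (Suc 0) = (D, \<lambda>_. {})"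
| "rca m D (Suc (Suc r)) = (case rca m D (Suc r) of (E, P) \<Rightarrow> rca_step m (Suc r) E P)"

end

theory Submission
  imports Defs
begin


lemma sum_mid_left: "(\<Sum>k\<in>{1..m}. mid m a k * f k) = (if a \<in> {1..m} then f a else (0::'a::field))"
proof -
  have "(\<Sum>k\<in>{1..m}. mid m a k * f k) = (\<Sum>k\<in>{1..m}. if a = k then f k else 0)"
    by (rule sum.cong) (auto simp: mid_def)
  also have "\<dots> = (if a \<in> {1..m} then f a else 0)" by (rule sum.delta'[OF finite_atLeastAtMost])
  finally show ?thesis .
qed

lemma sum_mid_right: "(\<Sum>k\<in>{1..m}. f k * mid m k b) = (if b \<in> {1..m} then f b else (0::'a::field))"
proof -
  have "(\<Sum>k\<in>{1..m}. f k * mid m k b) = (\<Sum>k\<in>{1..m}. if k = b then f k else 0)"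
    by (rule sum.cong) (auto simp: mid_def)
  also have "\<dots> = (if b \<in> {1..m} then f b else 0)" by (rule sum.delta[OF finite_atLeastAtMost])
  finally show ?thesis .
qed

lemma sum_mid_left': "(\<Sum>k\<in>{Suc 0..m}. mid m a k * f k) = (if a \<in> {1..m} then f a else (0::'a::field))"
  using sum_mid_left[of m a f] by simp

lemma sum_mid_right': "(\<Sum>k\<in>{Suc 0..m}. f k * mid m k b) = (if b \<in> {1..m} then f b else (0::'a::field))"
  using sum_mid_right[of f m b] by simp

lemma mmult_assoc: "mmult m (mmult m A B) C = mmult m A (mmult m B C)"
  unfolding mmult_def
  by (auto intro!: ext simp: sum_distrib_left sum_distrib_right mult.assoc intro: sum.swap)

lemma mid_mult: "msupp m A \<Longrightarrow> mmult m (mid m) A = A"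
  unfolding mmult_def apply (intro ext) apply (subst sum_mid_left) unfolding msupp_def by auto

lemma mult_mid: "msupp m A \<Longrightarrow> mmult m A (mid m) = A"
  unfolding mmult_def apply (intro ext) apply (subst sum_mid_right) unfolding msupp_def by auto

lemma msupp_mult: "msupp m A \<Longrightarrow> msupp m B \<Longrightarrow> msupp m (mmult m A B)"
  unfolding mmult_def msupp_def by auto

lemma msupp_mid: "msupp m (mid m)"
  unfolding msupp_def mid_def by auto

lemma mult_zero_l: "mmult m mzero A = mzero"
  unfolding mmult_def mzero_def by auto
lemma mult_zero_r: "mmult m A mzero = mzero"
  unfolding mmult_def mzero_def by auto

definition uu :: "nat \<Rightarrow> ('a::field) mtx \<Rightarrow> bool" where
  "uu m U \<longleftrightarrow> msupp m U \<and> (\<forall>a b. b < a \<longrightarrow> U a b = 0) \<and> (\<forall>a\<in>{1..m}. U a a = 1)"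

lemma uu_mult: assumes "uu m A" "uu m B" shows "uu m (mmult m A B)"
proof -
  have sA: "msupp m A" and lA: "\<And>a b. b < a \<Longrightarrow> A a b = 0" and dA: "\<And>a. a\<in>{1..m} \<Longrightarrow> A a a = 1"
    using assms(1) unfolding uu_def by auto
  have sB: "msupp m B" and lB: "\<And>a b. b < a \<Longrightarrow> B a b = 0" and dB: "\<And>a. a\<in>{1..m} \<Longrightarrow> B a a = 1"
    using assms(2) unfolding uu_def by auto
  have "\<forall>a b. b < a \<longrightarrow> mmult m A B a b = 0"
  proof (intro allI impI)
    fix a b :: nat assume "b < a"
    have "\<And>k. A a k * B k b = 0"
    proof -
      fix k show "A a k * B k b = 0"
        using lA[of k a] lB[of b k] \<open>b < a\<close> by (cases "k < a") auto
    qed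
    then show "mmult m A B a b = 0" unfolding mmult_def by (simp del: mult_eq_0_iff)
  qed
  moreover have "\<forall>a\<in>{1..m}. mmult m A B a a = 1"
  proof
    fix a assume a: "a \<in> {1..m}"
    have "(\<Sum>k\<in>{1..m}. A a k * B k a) = (\<Sum>k\<in>{1..m}. if k = a then A a a * B a a else 0)"
      apply (rule sum.cong, simp)
      using lA lB by (metis linorder_neqE_nat mult_eq_0_iff)
    also have "\<dots> = A a a * B a a" using a by (simp add: sum.delta)
    finally show "mmult m A B a a = 1" unfolding mmult_def using dA dB a by simp
  qed
  ultimately show ?thesis unfolding uu_def using msupp_mult sA sB by blast
qed

lemma uu_mid: "uu m (mid m)"
  unfolding uu_def mid_def msupp_def by auto

definition isinv :: "nat \<Rightarrow> ('a::field) mtx \<Rightarrow> 'a mtx \<Rightarrow> bool" where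
  "isinv m T S \<longleftrightarrow> msupp m S \<and> mmult m S T = mid m \<and> mmult m T S = mid m"

lemma minv_eq: assumes "msupp m T" "isinv m T S" shows "minv m T = S"
proof -
  have ex: "\<exists>S. msupp m S \<and> mmult m S T = mid m \<and> mmult m T S = mid m"
    using assms(2) unfolding isinv_def by blast
  define S' where "S' = minv m T"
  have S': "msupp m S' \<and> mmult m S' T = mid m \<and> mmult m T S' = mid m"
    unfolding S'_def minv_def by (rule someI_ex[OF ex])
  have "S' = mmult m S' (mmult m T S)" using assms(2) S' unfolding isinv_def by (simp add: mult_mid)
  also have "\<dots> = mmult m (mmult m S' T) S" by (simp add: mmult_assoc)
  also have "\<dots> = S" using assms(2) S' unfolding isinv_def by (simp add: mid_mult)
  finally show ?thesis unfolding S'_def .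
qed

lemma isinv_mult: assumes "isinv m A A'" "isinv m B B'" "msupp m A" "msupp m B"
  shows "isinv m (mmult m A B) (mmult m B' A')"
proof -
  have "mmult m (mmult m B' A') (mmult m A B) = mmult m B' (mmult m (mmult m A' A) B)"
    by (simp add: mmult_assoc)
  also have "\<dots> = mid m" using assms unfolding isinv_def by (simp add: mid_mult)
  finally have 1: "mmult m (mmult m B' A') (mmult m A B) = mid m" .
  have "mmult m (mmult m A B) (mmult m B' A') = mmult m A (mmult m (mmult m B B') A')"
    by (simp add: mmult_assoc)
  also have "\<dots> = mid m" using assms unfolding isinv_def by (simp add: mid_mult)
  finally show ?thesis using 1 assms msupp_mult unfolding isinv_def by blast
qed

lemma isinv_nil:
  fixes N :: "('a::field) mtx"
  assumes "msupp m N" "mmult m N N = mzero"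
  shows "isinv m (\<lambda>a b. mid m a b - N a b) (\<lambda>a b. mid m a b + N a b)"
proof -
  have sN: "\<And>a b. \<not>(a\<in>{1..m} \<and> b\<in>{1..m}) \<Longrightarrow> N a b = 0" using assms(1) unfolding msupp_def by blast
  have NN: "\<And>a b. (\<Sum>k\<in>{1..m}. N a k * N k b) = 0" using assms(2) unfolding mmult_def mzero_def
    by (metis)
  have 1: "mmult m (\<lambda>a b. mid m a b + N a b) (\<lambda>a b. mid m a b - N a b) = mid m"
  proof (intro ext)
    fix a b
    have "(\<Sum>k\<in>{1..m}. (mid m a k + N a k) * (mid m k b - N k b))
       = (\<Sum>k\<in>{1..m}. mid m a k * mid m k b) - (\<Sum>k\<in>{1..m}. mid m a k * N k b)
         + (\<Sum>k\<in>{1..m}. N a k * mid m k b) - (\<Sum>k\<in>{1..m}. N a k * N k b)"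
      by (simp only: ring_distribs sum.distrib sum_subtractf) (simp add: algebra_simps)
    also have "\<dots> = mid m a b"
      apply (simp only: sum_mid_left sum_mid_right NN)
      using sN[of a b] by (auto simp: mid_def)
    finally show "mmult m (\<lambda>a b. mid m a b + N a b) (\<lambda>a b. mid m a b - N a b) a b = mid m a b"
      unfolding mmult_def .
  qed
  have 2: "mmult m (\<lambda>a b. mid m a b - N a b) (\<lambda>a b. mid m a b + N a b) = mid m"
  proof (intro ext)
    fix a b
    have "(\<Sum>k\<in>{1..m}. (mid m a k - N a k) * (mid m k b + N k b))
       = (\<Sum>k\<in>{1..m}. mid m a k * mid m k b) + (\<Sum>k\<in>{1..m}. mid m a k * N k b)
         - (\<Sum>k\<in>{1..m}. N a k * mid m k b) - (\<Sum>k\<in>{1..m}. N a k * N k b)"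
      by (simp only: ring_distribs sum.distrib sum_subtractf) (simp add: algebra_simps)
    also have "\<dots> = mid m a b"
      apply (simp only: sum_mid_left sum_mid_right NN)
      using sN[of a b] by (auto simp: mid_def)
    finally show "mmult m (\<lambda>a b. mid m a b - N a b) (\<lambda>a b. mid m a b + N a b) a b = mid m a b"
      unfolding mmult_def .
  qed
  have 3: "msupp m (\<lambda>a b. mid m a b + N a b)" using sN unfolding msupp_def mid_def by auto
  show ?thesis unfolding isinv_def using 1 2 3 by blast
qed

lemma uu_nil: assumes "msupp m N" "\<And>a b. b \<le> a \<Longrightarrow> N a b = 0"
  shows "uu m (\<lambda>a b. mid m a b - N a b)" "uu m (\<lambda>a b. mid m a b + N a b)"
  using assms unfolding uu_def msupp_def mid_def by auto


lemma sum_single: "finite S \<Longrightarrow> k \<in> S \<Longrightarrow> (\<And>t. t \<in> S \<Longrightarrow> t \<noteq> k \<Longrightarrow> f t = 0) \<Longrightarrow> sum f S = f k"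
proof -
  assume a: "finite S" "k \<in> S" "\<And>t. t \<in> S \<Longrightarrow> t \<noteq> k \<Longrightarrow> f t = 0"
  have "sum f S = f k + sum f (S - {k})" using a by (simp add: sum.remove)
  also have "sum f (S - {k}) = 0" using a by (intro sum.neutral) auto
  finally show ?thesis by simp
qed

lemma sum_split_j: fixes j m :: nat assumes "j \<in> {1..m}" "\<And>t. j < t \<Longrightarrow> f t = 0"
  shows "(\<Sum>t\<in>{1..m}. f t) = f j + (\<Sum>t\<in>{1..<j}. f t)"
proof -
  have "(\<Sum>t\<in>{1..m}. f t) = (\<Sum>t\<in>{1..j}. f t)"
    apply (rule sum.mono_neutral_right) using assms by auto
  also have "{1..j} = insert j {1..<j}" using assms by auto
  finally show ?thesis by simp
qed

definition validP :: "nat \<Rightarrow> nat \<Rightarrow> (nat \<times> nat) set \<Rightarrow> bool" where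
  "validP m r PP \<longleftrightarrow> (\<forall>h l. (h,l) \<in> PP \<longrightarrow> 1 \<le> h \<and> h < l \<and> l \<le> m \<and> l - h < r) \<and>
     (\<forall>h l l'. (h,l) \<in> PP \<longrightarrow> (h,l') \<in> PP \<longrightarrow> l = l') \<and>
     (\<forall>h h' l. (h,l) \<in> PP \<longrightarrow> (h',l) \<in> PP \<longrightarrow> h = h')"

definition freec :: "(nat \<times> nat) set \<Rightarrow> nat \<Rightarrow> bool" where
  "freec PP c \<longleftrightarrow> \<not> (\<exists>h. (h,c) \<in> PP)"

definition freer :: "(nat \<times> nat) set \<Rightarrow> nat \<Rightarrow> bool" where
  "freer PP i \<longleftrightarrow> \<not> (\<exists>p. (i,p) \<in> PP)"

definition ZZ :: "nat \<Rightarrow> nat \<Rightarrow> (nat \<times> nat) set \<Rightarrow> ('a::field) mtx \<Rightarrow> bool" where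
  "ZZ m r PP A \<longleftrightarrow> (\<forall>c k. c \<in> {1..m} \<longrightarrow> k \<in> {1..m} \<longrightarrow> freec PP c \<longrightarrow> c - k < r \<longrightarrow> A k c = 0) \<and>
     (\<forall>h l. (h,l) \<in> PP \<longrightarrow> A h l \<noteq> 0 \<and> (\<forall>k\<in>{1..m}. h < k \<longrightarrow> A k l = 0))"

definition RR :: "nat \<Rightarrow> (nat \<times> nat) set \<Rightarrow> ('a::field) mtx \<Rightarrow> bool" where
  "RR m PP A \<longleftrightarrow> (\<forall>h l q. (h,l) \<in> PP \<longrightarrow> q \<in> {1..m} \<longrightarrow> l < q \<longrightarrow> A h q = 0)"

lemma key:
  fixes X Y U :: "('a::field) mtx" and hf :: "nat \<Rightarrow> nat"
  assumes U: "uu m U" and YU: "mmult m Y U = mmult m U X"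
    and ij: "i \<in> {1..m}" "j \<in> {1..m}"
    and Xcol: "\<And>k. k \<in> {1..m} \<Longrightarrow> i < k \<Longrightarrow> X k j = 0"
    and Ycol: "\<And>k. k \<in> {1..m} \<Longrightarrow> i < k \<Longrightarrow> Y k j = 0"
    and cols: "\<And>c. c \<in> {1..<j} \<Longrightarrow> (\<forall>k\<in>{i..m}. Y k c = 0) \<or>
                 (i < hf c \<and> hf c \<le> m \<and> Y (hf c) c \<noteq> 0 \<and> (\<forall>k\<in>{1..m}. hf c < k \<longrightarrow> Y k c = 0))"
    and inj: "\<And>c c'. c \<in> {1..<j} \<Longrightarrow> c' \<in> {1..<j} \<Longrightarrow> \<not>(\<forall>k\<in>{i..m}. Y k c = 0) \<Longrightarrow>
                 \<not>(\<forall>k\<in>{i..m}. Y k c' = 0) \<Longrightarrow> hf c = hf c' \<Longrightarrow> c = c'"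
  shows "X i j = Y i j"
proof -
  have lU: "\<And>a b. b < a \<Longrightarrow> U a b = 0" and dU: "\<And>a. a \<in> {1..m} \<Longrightarrow> U a a = 1"
    using U unfolding uu_def by auto
  have eq: "Y k j + (\<Sum>c\<in>{1..<j}. Y k c * U c j) = X k j" if k: "k \<in> {i..m}" for k
  proof -
    have "mmult m Y U k j = Y k j * U j j + (\<Sum>c\<in>{1..<j}. Y k c * U c j)"
      unfolding mmult_def apply (rule sum_split_j) using ij lU by auto
    also have "U j j = 1" using dU ij by auto
    finally have 1: "mmult m Y U k j = Y k j + (\<Sum>c\<in>{1..<j}. Y k c * U c j)" by simp
    have "mmult m U X k j = U k k * X k j"
      unfolding mmult_def
    proof (rule sum_single)
      fix t assume t: "t \<in> {1..m}" "t \<noteq> k"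
      show "U k t * X t j = 0"
      proof (cases "t < k")
        case True then show ?thesis using lU by simp
      next
        case False then have "k < t" using t by simp
        then show ?thesis using Xcol[of t] t k by simp
      qed
    qed (use k ij in fastforce)+
    also have "U k k = 1" using dU k ij by auto
    finally show ?thesis using 1 YU by simp
  qed
  define C where "C = {c\<in>{1..<j}. U c j \<noteq> 0 \<and> \<not>(\<forall>k\<in>{i..m}. Y k c = 0)}"
  have finC: "finite C" unfolding C_def by auto
  have Cempty: "C = {}"
  proof (rule ccontr)
    assume ne: "C \<noteq> {}"
    define hs where "hs = Max (hf ` C)"
    have "hs \<in> hf ` C" unfolding hs_def using ne finC by (intro Max_in) auto
    then obtain cs where cs: "cs \<in> C" "hf cs = hs" by auto
    have hsmax: "\<And>c. c \<in> C \<Longrightarrow> hf c \<le> hs" unfolding hs_def using finC by auto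
    have csP: "i < hf cs \<and> hf cs \<le> m \<and> Y (hf cs) cs \<noteq> 0 \<and> (\<forall>k\<in>{1..m}. hf cs < k \<longrightarrow> Y k cs = 0)"
      using cols[of cs] cs(1) unfolding C_def by auto
    have hsr: "hs \<in> {i..m}" "i < hs" using csP cs by auto
    have "Y hs j + (\<Sum>c\<in>{1..<j}. Y hs c * U c j) = X hs j" using eq hsr by auto
    moreover have "Y hs j = 0" "X hs j = 0" using Ycol Xcol hsr ij by auto
    ultimately have s0: "(\<Sum>c\<in>{1..<j}. Y hs c * U c j) = 0" by simp
    have "(\<Sum>c\<in>{1..<j}. Y hs c * U c j) = Y hs cs * U cs j"
    proof (rule sum_single)
      fix c assume c: "c \<in> {1..<j}" "c \<noteq> cs"
      show "Y hs c * U c j = 0"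
      proof (cases "c \<in> C")
        case False
        then show ?thesis using c hsr unfolding C_def by auto
      next
        case True
        then have cP: "i < hf c \<and> hf c \<le> m \<and> Y (hf c) c \<noteq> 0 \<and> (\<forall>k\<in>{1..m}. hf c < k \<longrightarrow> Y k c = 0)"
          using cols[of c] c unfolding C_def by auto
        have "hf c \<noteq> hs" using inj[of c cs] True cs c unfolding C_def by auto
        then have "hf c < hs" using hsmax[OF True] by simp
        then show ?thesis using cP hsr ij by auto
      qed
    qed (use cs C_def in fastforce)+
    then have "Y hs cs * U cs j = 0" using s0 by simp
    moreover have "U cs j \<noteq> 0" using cs unfolding C_def by auto
    ultimately show False using csP cs by simp
  qed
  have "(\<Sum>c\<in>{1..<j}. Y i c * U c j) = 0"
  proof (rule sum.neutral, intro ballI)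
    fix c assume c: "c \<in> {1..<j}"
    show "Y i c * U c j = 0"
      using Cempty c ij unfolding C_def by auto
  qed
  then show ?thesis using eq[of i] ij by auto
qed


lemma cand_iff: "(i,j) \<in> cand m r A P \<longleftrightarrow> r < j \<and> j \<le> m \<and> i = j - r \<and> A i j \<noteq> 0 \<and> freec (earlier P r) j"
  unfolding cand_def freec_def by auto

lemma cob_iff: "(i,j) \<in> isa_cob m r A P \<longleftrightarrow> (i,j) \<in> cand m r A P \<and> \<not> freer (earlier P r) i"
  unfolding isa_cob_def freer_def by auto

lemma prim_iff: "(i,j) \<in> isa_prim m r A P \<longleftrightarrow> (i,j) \<in> cand m r A P \<and> freer (earlier P r) i"
  unfolding isa_prim_def using cob_iff by blast

lemma key_app:
  fixes X Y U :: "('a::field) mtx"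
  assumes U: "uu m U" and YU: "mmult m Y U = mmult m U X"
    and V: "validP m r PP" and ZY: "ZZ m r PP Y"
    and ij: "i \<in> {1..m}" "j \<in> {1..m}"
    and Xcol: "\<And>k. k \<in> {1..m} \<Longrightarrow> i < k \<Longrightarrow> X k j = 0"
    and Ycol: "\<And>k. k \<in> {1..m} \<Longrightarrow> i < k \<Longrightarrow> Y k j = 0"
    and fr: "\<And>c. c \<in> {1..<j} \<Longrightarrow> freec PP c \<Longrightarrow> c - i < r"
    and pr: "\<And>h c. (h,c) \<in> PP \<Longrightarrow> c < j \<Longrightarrow> h \<noteq> i"
  shows "X i j = Y i j"
proof -
  define hf where "hf c = (THE h. (h,c) \<in> PP)" for c
  have Vb: "\<And>h l. (h,l) \<in> PP \<Longrightarrow> 1 \<le> h \<and> h < l \<and> l \<le> m \<and> l - h < r"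
    and Vr: "\<And>h l l'. (h,l) \<in> PP \<Longrightarrow> (h,l') \<in> PP \<Longrightarrow> l = l'"
    and Vc: "\<And>h h' l. (h,l) \<in> PP \<Longrightarrow> (h',l) \<in> PP \<Longrightarrow> h = h'"
    using V unfolding validP_def by blast+
  have Z1: "\<And>c k. c \<in> {1..m} \<Longrightarrow> k \<in> {1..m} \<Longrightarrow> freec PP c \<Longrightarrow> c - k < r \<Longrightarrow> Y k c = 0"
    and Z2: "\<And>h l. (h,l) \<in> PP \<Longrightarrow> Y h l \<noteq> 0 \<and> (\<forall>k\<in>{1..m}. h < k \<longrightarrow> Y k l = 0)"
    using ZY unfolding ZZ_def by blast+
  have hfc: "\<And>h c. (h,c) \<in> PP \<Longrightarrow> hf c = h"
    unfolding hf_def using Vc by blast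
  have cols: "(\<forall>k\<in>{i..m}. Y k c = 0) \<or>
      (i < hf c \<and> hf c \<le> m \<and> Y (hf c) c \<noteq> 0 \<and> (\<forall>k\<in>{1..m}. hf c < k \<longrightarrow> Y k c = 0))"
    if c: "c \<in> {1..<j}" for c
  proof (cases "freec PP c")
    case True
    have "\<forall>k\<in>{i..m}. Y k c = 0"
    proof
      fix k assume k: "k \<in> {i..m}"
      have "c - k < r" using fr[OF c True] k by auto
      then show "Y k c = 0" using Z1[of c k] True c k ij by auto
    qed
    then show ?thesis by blast
  next
    case False
    then obtain h where h: "(h,c) \<in> PP" unfolding freec_def by auto
    have "h \<noteq> i" using pr[OF h] c by auto
    show ?thesis
    proof (cases "h < i")
      case True
      then show ?thesis using Z2[OF h] ij by auto
    next
      case False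
      then show ?thesis using \<open>h \<noteq> i\<close> hfc[OF h] Z2[OF h] Vb[OF h] by auto
    qed
  qed
  show ?thesis
  proof (rule key[OF U YU ij Xcol Ycol, of hf])
    show "\<And>c. c \<in> {1..<j} \<Longrightarrow> (\<forall>k\<in>{i..m}. Y k c = 0) \<or>
      (i < hf c \<and> hf c \<le> m \<and> Y (hf c) c \<noteq> 0 \<and> (\<forall>k\<in>{1..m}. hf c < k \<longrightarrow> Y k c = 0))"
      using cols by blast
  next
    fix c c' assume c: "c \<in> {1..<j}" "c' \<in> {1..<j}" "\<not>(\<forall>k\<in>{i..m}. Y k c = 0)"
      "\<not>(\<forall>k\<in>{i..m}. Y k c' = 0)" "hf c = hf c'"
    have "\<not> freec PP c"
    proof
      assume f: "freec PP c"
      have "\<forall>k\<in>{i..m}. Y k c = 0"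
      proof
        fix k assume k: "k \<in> {i..m}"
        have "c - k < r" using fr[OF c(1) f] k by auto
        then show "Y k c = 0" using Z1[of c k] f c k ij by auto
      qed
      then show False using c by blast
    qed
    moreover have "\<not> freec PP c'"
    proof
      assume f: "freec PP c'"
      have "\<forall>k\<in>{i..m}. Y k c' = 0"
      proof
        fix k assume k: "k \<in> {i..m}"
        have "c' - k < r" using fr[OF c(2) f] k by auto
        then show "Y k c' = 0" using Z1[of c' k] f c k ij by auto
      qed
      then show False using c by blast
    qed
    ultimately obtain h h' where "(h,c) \<in> PP" "(h',c') \<in> PP" unfolding freec_def by auto
    then show "c = c'" using hfc c(5) Vr by metis
  qed (use ij Xcol Ycol in auto)
qed

lemma concl:
  fixes X Y U :: "('a::field) mtx"
  assumes r: "1 \<le> r" and PP: "PP = earlier P r" and V: "validP m r PP"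
    and ZX: "ZZ m r PP X" and ZY: "ZZ m r PP Y" and RY: "RR m PP Y"
    and U: "uu m U" and YU: "mmult m Y U = mmult m U X"
  shows "isa_prim m r X P = cand m r Y P"
    and "\<And>i j. (i,j) \<in> PP \<union> isa_prim m r X P \<Longrightarrow> X i j = Y i j"
proof -
  have Vb: "\<And>h l. (h,l) \<in> PP \<Longrightarrow> 1 \<le> h \<and> h < l \<and> l \<le> m \<and> l - h < r"
    and Vr: "\<And>h l l'. (h,l) \<in> PP \<Longrightarrow> (h,l') \<in> PP \<Longrightarrow> l = l'"
    and Vc: "\<And>h h' l. (h,l) \<in> PP \<Longrightarrow> (h',l) \<in> PP \<Longrightarrow> h = h'"
    using V unfolding validP_def by blast+
  have ZX1: "\<And>c k. c \<in> {1..m} \<Longrightarrow> k \<in> {1..m} \<Longrightarrow> freec PP c \<Longrightarrow> c - k < r \<Longrightarrow> X k c = 0"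
    and ZX2: "\<And>h l. (h,l) \<in> PP \<Longrightarrow> X h l \<noteq> 0 \<and> (\<forall>k\<in>{1..m}. h < k \<longrightarrow> X k l = 0)"
    using ZX unfolding ZZ_def by blast+
  have ZY1: "\<And>c k. c \<in> {1..m} \<Longrightarrow> k \<in> {1..m} \<Longrightarrow> freec PP c \<Longrightarrow> c - k < r \<Longrightarrow> Y k c = 0"
    and ZY2: "\<And>h l. (h,l) \<in> PP \<Longrightarrow> Y h l \<noteq> 0 \<and> (\<forall>k\<in>{1..m}. h < k \<longrightarrow> Y k l = 0)"
    using ZY unfolding ZZ_def by blast+
  have piv: "X i p = Y i p" if ip: "(i,p) \<in> PP" for i p
  proof (rule key_app[OF U YU V ZY])
    show "i \<in> {1..m}" "p \<in> {1..m}" using Vb[OF ip] by auto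
    show "\<And>k. k \<in> {1..m} \<Longrightarrow> i < k \<Longrightarrow> X k p = 0" using ZX2[OF ip] by auto
    show "\<And>k. k \<in> {1..m} \<Longrightarrow> i < k \<Longrightarrow> Y k p = 0" using ZY2[OF ip] by auto
    show "\<And>c. c \<in> {1..<p} \<Longrightarrow> freec PP c \<Longrightarrow> c - i < r" using Vb[OF ip] by auto
    show "\<And>h c. (h,c) \<in> PP \<Longrightarrow> c < p \<Longrightarrow> h \<noteq> i" using Vr ip by blast
  qed
  have fre: "X i j = Y i j" if "r < j" "j \<le> m" "i = j - r" "freec PP j" "freer PP i" for i j
  proof (rule key_app[OF U YU V ZY])
    show "i \<in> {1..m}" "j \<in> {1..m}" using that by auto
    show "\<And>k. k \<in> {1..m} \<Longrightarrow> i < k \<Longrightarrow> X k j = 0"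
    proof -
      fix k assume k: "k \<in> {1..m}" "i < k"
      then have "j - k < r" using that r by arith
      then show "X k j = 0" using ZX1[of j k] that k by auto
    qed
    show "\<And>k. k \<in> {1..m} \<Longrightarrow> i < k \<Longrightarrow> Y k j = 0"
    proof -
      fix k assume k: "k \<in> {1..m}" "i < k"
      then have "j - k < r" using that r by arith
      then show "Y k j = 0" using ZY1[of j k] that k by auto
    qed
    show "\<And>c. c \<in> {1..<j} \<Longrightarrow> freec PP c \<Longrightarrow> c - i < r" using that r by (auto; arith)
    show "\<And>h c. (h,c) \<in> PP \<Longrightarrow> c < j \<Longrightarrow> h \<noteq> i" using that unfolding freer_def by blast
  qed
  show eqs: "isa_prim m r X P = cand m r Y P"
  proof (intro set_eqI)
    fix x :: "nat \<times> nat"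
    obtain i j :: nat where x: "x = (i,j)" by (cases x)
    show "x \<in> isa_prim m r X P \<longleftrightarrow> x \<in> cand m r Y P"
    proof (cases "freer PP i")
      case True
      then show ?thesis unfolding x prim_iff cand_iff using fre[of j i] PP True by auto
    next
      case False
      then obtain p where p: "(i,p) \<in> PP" unfolding freer_def by auto
      have "\<not> (x \<in> cand m r Y P)"
      proof
        assume "x \<in> cand m r Y P"
        then have c: "r < j \<and> j \<le> m \<and> i = j - r \<and> Y i j \<noteq> 0" unfolding x cand_iff by auto
        have "p < j" using Vb[OF p] c by auto
        then have "Y i j = 0" using RY p c unfolding RR_def by auto
        then show False using c by auto
      qed
      then show ?thesis unfolding x prim_iff using False PP by auto
    qed
  qed
  show "\<And>i j. (i,j) \<in> PP \<union> isa_prim m r X P \<Longrightarrow> X i j = Y i j"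
  proof -
    fix i j assume "(i,j) \<in> PP \<union> isa_prim m r X P"
    then show "X i j = Y i j"
    proof
      assume "(i,j) \<in> PP" then show ?thesis using piv by blast
    next
      assume "(i,j) \<in> isa_prim m r X P"
      then show ?thesis unfolding prim_iff cand_iff using fre PP by auto
    qed
  qed
qed


lemma lemG:
  fixes V B :: "('a::field) mtx"
  assumes "uu m V" "k \<in> {1..m}" "\<And>t. t \<in> {1..m} \<Longrightarrow> k < t \<Longrightarrow> B t l = 0"
  shows "mmult m V B k l = B k l"
proof -
  have lV: "\<And>a b. b < a \<Longrightarrow> V a b = 0" and dV: "\<And>a. a \<in> {1..m} \<Longrightarrow> V a a = 1"
    using assms(1) unfolding uu_def by auto
  have "mmult m V B k l = V k k * B k l"
    unfolding mmult_def
  proof (rule sum_single)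
    fix t assume t: "t \<in> {1..m}" "t \<noteq> k"
    show "V k t * B t l = 0"
    proof (cases "t < k")
      case True then show ?thesis using lV by simp
    next
      case False then show ?thesis using assms(3)[of t] t by simp
    qed
  qed (use assms(2) in auto)
  then show ?thesis using dV assms(2) by simp
qed

lemma validP_step:
  assumes r: "1 \<le> r" and PP: "PP = earlier P r" and V: "validP m r PP"
  shows "validP m (Suc r) (PP \<union> isa_prim m r X P)"
proof -
  have Vb: "\<And>h l. (h,l) \<in> PP \<Longrightarrow> 1 \<le> h \<and> h < l \<and> l \<le> m \<and> l - h < r"
    and Vr: "\<And>h l l'. (h,l) \<in> PP \<Longrightarrow> (h,l') \<in> PP \<Longrightarrow> l = l'"
    and Vc: "\<And>h h' l. (h,l) \<in> PP \<Longrightarrow> (h',l) \<in> PP \<Longrightarrow> h = h'"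
    using V unfolding validP_def by blast+
  have N: "\<And>h l. (h,l) \<in> isa_prim m r X P \<Longrightarrow> r < l \<and> l \<le> m \<and> h = l - r \<and> freec PP l \<and> freer PP h"
    unfolding prim_iff cand_iff PP by auto
  have A1: "\<forall>h l. (h,l) \<in> PP \<union> isa_prim m r X P \<longrightarrow> 1 \<le> h \<and> h < l \<and> l \<le> m \<and> l - h < Suc r"
  proof (intro allI impI)
    fix h l assume "(h,l) \<in> PP \<union> isa_prim m r X P"
    then show "1 \<le> h \<and> h < l \<and> l \<le> m \<and> l - h < Suc r"
    proof (elim UnE)
      assume "(h,l) \<in> PP" then show ?thesis using Vb[of h l] by auto
    next
      assume "(h,l) \<in> isa_prim m r X P"
      then have "r < l" "l \<le> m" "h = l - r" using N by blast+
      then show ?thesis using r by arith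
    qed
  qed
  have A2: "\<forall>h l l'. (h,l) \<in> PP \<union> isa_prim m r X P \<longrightarrow> (h,l') \<in> PP \<union> isa_prim m r X P \<longrightarrow> l = l'"
  proof (intro allI impI)
    fix h l l' assume a: "(h,l) \<in> PP \<union> isa_prim m r X P" "(h,l') \<in> PP \<union> isa_prim m r X P"
    show "l = l'" using a
    proof (elim UnE)
      assume "(h,l) \<in> PP" "(h,l') \<in> PP" then show ?thesis by (rule Vr)
    next
      assume "(h,l) \<in> PP" "(h,l') \<in> isa_prim m r X P" then show ?thesis using N unfolding freer_def by blast
    next
      assume "(h,l) \<in> isa_prim m r X P" "(h,l') \<in> PP" then show ?thesis using N unfolding freer_def by blast
    next
      assume "(h,l) \<in> isa_prim m r X P" "(h,l') \<in> isa_prim m r X P"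
      then have "r < l" "h = l - r" "r < l'" "h = l' - r" using N by blast+
      then show ?thesis by arith
    qed
  qed
  have A3: "\<forall>h h' l. (h,l) \<in> PP \<union> isa_prim m r X P \<longrightarrow> (h',l) \<in> PP \<union> isa_prim m r X P \<longrightarrow> h = h'"
  proof (intro allI impI)
    fix h h' l assume a: "(h,l) \<in> PP \<union> isa_prim m r X P" "(h',l) \<in> PP \<union> isa_prim m r X P"
    show "h = h'" using a
    proof (elim UnE)
      assume "(h,l) \<in> PP" "(h',l) \<in> PP" then show ?thesis by (rule Vc)
    next
      assume "(h,l) \<in> PP" "(h',l) \<in> isa_prim m r X P" then show ?thesis using N unfolding freec_def by blast
    next
      assume "(h,l) \<in> isa_prim m r X P" "(h',l) \<in> PP" then show ?thesis using N unfolding freec_def by blast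
    next
      assume "(h,l) \<in> isa_prim m r X P" "(h',l) \<in> isa_prim m r X P"
      then show ?thesis using N by blast
    qed
  qed
  show ?thesis unfolding validP_def using A1 A2 A3 by blast
qed

lemma cob_fin: "finite (isa_cob m r X P)"
proof -
  have "isa_cob m r X P \<subseteq> (\<lambda>j. (j - r, j)) ` {..m}"
    unfolding isa_cob_def cand_def by auto
  then show ?thesis by (rule finite_surj[OF finite_atMost])
qed



lemma isa_step_props:
  fixes X :: "('a::field) mtx"
  assumes r: "1 \<le> r" and PP: "PP = earlier P r" and V: "validP m r PP"
    and ZX: "ZZ m r PP X" and sX: "msupp m X"
  defines "T \<equiv> isa_T m r X P"
  shows "uu m T" "uu m (minv m T)" "isinv m T (minv m T)"
    "ZZ m (Suc r) (PP \<union> isa_prim m r X P) (mmult m (mmult m (minv m T) X) T)"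
    "msupp m (mmult m (mmult m (minv m T) X) T)"
proof -
  have Vb: "\<And>h l. (h,l) \<in> PP \<Longrightarrow> 1 \<le> h \<and> h < l \<and> l \<le> m \<and> l - h < r"
    and Vr: "\<And>h l l'. (h,l) \<in> PP \<Longrightarrow> (h,l') \<in> PP \<Longrightarrow> l = l'"
    and Vc: "\<And>h h' l. (h,l) \<in> PP \<Longrightarrow> (h',l) \<in> PP \<Longrightarrow> h = h'"
    using V unfolding validP_def by blast+
  have Z1: "\<And>c k. c \<in> {1..m} \<Longrightarrow> k \<in> {1..m} \<Longrightarrow> freec PP c \<Longrightarrow> c - k < r \<Longrightarrow> X k c = 0"
    and Z2: "\<And>h l. (h,l) \<in> PP \<Longrightarrow> X h l \<noteq> 0 \<and> (\<forall>k\<in>{1..m}. h < k \<longrightarrow> X k l = 0)"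
    using ZX unfolding ZZ_def by blast+
  define cob where "cob = isa_cob m r X P"
  define pp where "pp = ppcol P r"
  define coef where "coef c = X (fst c) (snd c) / X (fst c) (pp (fst c))" for c
  define N where "N a b = (\<Sum>c\<in>cob. coef c * Umat (pp (fst c)) (snd c) a b)" for a b
  have TN: "T = (\<lambda>a b. mid m a b - N a b)"
    unfolding T_def isa_T_def N_def cob_def coef_def pp_def by simp
  have cobI: "\<And>i j. (i,j) \<in> cob \<longleftrightarrow> r < j \<and> j \<le> m \<and> i = j - r \<and> X i j \<noteq> 0 \<and> freec PP j \<and> \<not> freer PP i"
    unfolding cob_def cob_iff cand_iff PP by auto
  have ppI: "\<And>i p. (i,p) \<in> PP \<Longrightarrow> pp i = p"
    unfolding pp_def ppcol_def PP[symmetric] using Vr by blast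
  have Neq: "N a b = (if (b - r, b) \<in> cob \<and> a = pp (b - r) then coef (b - r, b) else 0)" for a b
  proof -
    have "N a b = (\<Sum>c\<in>cob. if c = (b - r, b) then (if a = pp (b - r) then coef (b - r, b) else 0) else 0)"
      unfolding N_def
    proof (rule sum.cong)
      fix c assume c: "c \<in> cob"
      obtain i j where cij: "c = (i,j)" by (cases c)
      have "i = j - r" using c cobI cij by auto
      then show "coef c * Umat (pp (fst c)) (snd c) a b =
        (if c = (b - r, b) then (if a = pp (b - r) then coef (b - r, b) else 0) else 0)"
        unfolding Umat_def cij by auto
    qed simp
    also have "\<dots> = (if (b - r, b) \<in> cob then (if a = pp (b - r) then coef (b - r, b) else 0) else 0)"
      by (rule sum.delta[OF cob_fin[of m r X P, folded cob_def]])
    finally show ?thesis by auto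
  qed
  have Nnz: "\<And>a b. N a b \<noteq> 0 \<Longrightarrow> (b - r, b) \<in> cob \<and> (b - r, a) \<in> PP"
  proof -
    fix a b assume "N a b \<noteq> 0"
    then have 1: "(b - r, b) \<in> cob" "a = pp (b - r)" using Neq[of a b] by (auto split: if_splits)
    then obtain p where p: "(b - r, p) \<in> PP" using cobI unfolding freer_def by blast
    then show "(b - r, b) \<in> cob \<and> (b - r, a) \<in> PP" using 1 ppI by auto
  qed
  have sN: "msupp m N"
    unfolding msupp_def
  proof (intro allI impI)
    fix a b assume ab: "\<not> (a \<in> {1..m} \<and> b \<in> {1..m})"
    show "N a b = 0"
    proof (rule ccontr)
      assume "N a b \<noteq> 0"
      then have "(b - r, b) \<in> cob \<and> (b - r, a) \<in> PP" by (rule Nnz)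
      then show False using ab cobI Vb by fastforce
    qed
  qed
  have lN: "\<And>a b. b \<le> a \<Longrightarrow> N a b = 0"
  proof (rule ccontr)
    fix a b assume ab: "b \<le> a" "N a b \<noteq> 0"
    then have "(b - r, b) \<in> cob \<and> (b - r, a) \<in> PP" using Nnz by blast
    then have "a - (b - r) < r" "r < b" using Vb[of "b - r" a] cobI[of "b - r" b] by blast+
    then show False using ab by arith
  qed
  have NN: "mmult m N N = mzero"
    unfolding mmult_def mzero_def
  proof (intro ext sum.neutral ballI)
    fix a b k
    show "N a k * N k b = 0"
    proof (rule ccontr)
      assume "N a k * N k b \<noteq> 0"
      then have "(k - r, k) \<in> cob" "(b - r, k) \<in> PP" using Nnz by auto
      then show False using cobI unfolding freec_def by blast
    qed
  qed
  have uT: "uu m T" unfolding TN by (rule uu_nil(1)[OF sN lN])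
  have inv: "isinv m T (\<lambda>a b. mid m a b + N a b)" unfolding TN by (rule isinv_nil[OF sN NN])
  have sT: "msupp m T" using uT unfolding uu_def by auto
  have mi: "minv m T = (\<lambda>a b. mid m a b + N a b)" by (rule minv_eq[OF sT inv])
  show "uu m T" by (rule uT)
  show uV: "uu m (minv m T)" unfolding mi by (rule uu_nil(2)[OF sN lN])
  show "isinv m T (minv m T)" unfolding mi by (rule inv)
  have sV: "msupp m (minv m T)" using uV unfolding uu_def by auto
  define B where "B = mmult m X T"
  have X': "mmult m (mmult m (minv m T) X) T = mmult m (minv m T) B"
    unfolding B_def by (simp add: mmult_assoc)
  show "msupp m (mmult m (mmult m (minv m T) X) T)"
    by (intro msupp_mult sV sX sT)
  have Bnc: "B t c = X t c" if c: "c \<in> {1..m}" "(c - r, c) \<notin> cob" for t c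
  proof -
    have "B t c = (\<Sum>k\<in>{1..m}. X t k * mid m k c) - (\<Sum>k\<in>{1..m}. X t k * N k c)"
      unfolding B_def mmult_def TN by (simp add: algebra_simps sum_subtractf)
    also have "(\<Sum>k\<in>{1..m}. X t k * N k c) = 0"
      using Nnz c by (intro sum.neutral) auto
    finally show ?thesis using c by (simp add: sum_mid_right sum_mid_right')
  qed
  have Bc: "B t c = X t c - coef (c - r, c) * X t p" if c: "c \<in> {1..m}" "(c - r, c) \<in> cob" "(c - r, p) \<in> PP" for t c p
  proof -
    have "B t c = (\<Sum>k\<in>{1..m}. X t k * mid m k c) - (\<Sum>k\<in>{1..m}. X t k * N k c)"
      unfolding B_def mmult_def TN by (simp add: algebra_simps sum_subtractf)
    also have "(\<Sum>k\<in>{1..m}. X t k * N k c) = X t p * N p c"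
    proof (rule sum_single)
      fix k assume "k \<in> {1..m}" "k \<noteq> p"
      then show "X t k * N k c = 0" using Nnz[of k c] Vr c by auto
    qed (use Vb c in fastforce)+
    also have "N p c = coef (c - r, c)" using Neq[of p c] c ppI by auto
    finally show ?thesis using c by (simp add: sum_mid_right sum_mid_right')
  qed
  have Z1': "\<forall>c k. c \<in> {1..m} \<longrightarrow> k \<in> {1..m} \<longrightarrow> freec (PP \<union> isa_prim m r X P) c \<longrightarrow> c - k < Suc r \<longrightarrow> mmult m (minv m T) B k c = 0"
  proof (intro allI impI)
    fix c k assume c: "c \<in> {1..m}" and k: "k \<in> {1..m}" and fc: "freec (PP \<union> isa_prim m r X P) c"
      and ck: "c - k < Suc r"
    have fc0: "freec PP c" using fc unfolding freec_def by auto
    have allB: "B t c = 0" if t: "t \<in> {1..m}" "c - t < Suc r" for t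
    proof (cases "(c - r, c) \<in> cob")
      case True
      then obtain p where p: "(c - r, p) \<in> PP" using cobI unfolding freer_def by blast
      have cr: "r < c" using True cobI by auto
      have Bt: "B t c = X t c - coef (c - r, c) * X t p" by (rule Bc[OF c True p])
      show ?thesis
      proof (cases "t = c - r")
        case True
        have "X (c - r) p \<noteq> 0" using Z2[OF p] by auto
        then show ?thesis using Bt True unfolding coef_def using ppI[OF p] by simp
      next
        case False
        then have "c - t < r \<and> c - r < t" using t cr r by arith
        then have "c - t < r" "c - r < t" by auto
        then show ?thesis using Bt Z1[OF c t(1) fc0] Z2[OF p] t by auto
      qed
    next
      case False
      have Bt: "B t c = X t c" by (rule Bnc[OF c False])
      show ?thesis
      proof (cases "c - t < r")
        case True then show ?thesis using Bt Z1[OF c t(1) fc0] by simp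
      next
        case False
        then have "t = c - r \<and> r < c" using t r by (simp; arith)
        then have tc: "t = c - r" "r < c" by auto
        have "(c - r, c) \<notin> cand m r X P"
        proof
          assume a: "(c - r, c) \<in> cand m r X P"
          then have "(c - r, c) \<in> isa_prim m r X P"
            using \<open>(c - r, c) \<notin> cob\<close> unfolding isa_prim_def cob_def by auto
          then show False using fc unfolding freec_def by auto
        qed
        then have "X (c - r) c = 0" unfolding cand_iff using tc c fc0 PP by auto
        then show ?thesis using Bt tc by simp
      qed
    qed
    have "mmult m (minv m T) B k c = B k c"
    proof (rule lemG[OF uV k])
      fix t assume t: "t \<in> {1..m}" "k < t"
      then have "c - t < Suc r" using ck by arith
      then show "B t c = 0" using allB t by blast
    qed
    then show "mmult m (minv m T) B k c = 0" using allB[OF k ck] by simp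
  qed
  have Z2': "\<forall>h l. (h,l) \<in> PP \<union> isa_prim m r X P \<longrightarrow> mmult m (minv m T) B h l \<noteq> 0 \<and>
         (\<forall>k\<in>{1..m}. h < k \<longrightarrow> mmult m (minv m T) B k l = 0)"
  proof (intro allI impI)
    fix h l assume hl: "(h,l) \<in> PP \<union> isa_prim m r X P"
    have "validP m (Suc r) (PP \<union> isa_prim m r X P)" by (rule validP_step[OF r PP V])
    then have "1 \<le> h \<and> h < l \<and> l \<le> m" using hl unfolding validP_def by blast
    then have hlb: "h \<in> {1..m}" "l \<in> {1..m}" by auto
    have ncob: "(l - r, l) \<notin> cob"
      using hl
    proof (elim UnE)
      assume "(h,l) \<in> PP" then show ?thesis using cobI unfolding freec_def by blast
    next
      assume "(h,l) \<in> isa_prim m r X P"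
      then have "h = l - r" "freer PP h" unfolding prim_iff cand_iff PP by auto
      then show ?thesis using cobI by blast
    qed
    have XZ: "X h l \<noteq> 0 \<and> (\<forall>k\<in>{1..m}. h < k \<longrightarrow> X k l = 0)"
    proof (cases "(h,l) \<in> PP")
      case True then show ?thesis using Z2 by blast
    next
      case False
      then have n: "(h,l) \<in> isa_prim m r X P" using hl by blast
      then have n2: "r < l" "l \<le> m" "h = l - r" "X h l \<noteq> 0" "freec PP l" unfolding prim_iff cand_iff PP by auto
      have "\<forall>k\<in>{1..m}. h < k \<longrightarrow> X k l = 0"
      proof (intro ballI impI)
        fix k assume k: "k \<in> {1..m}" "h < k"
        then have "l - k < r" using n2 r by arith
        then show "X k l = 0" using Z1[of l k] k n2 by simp
      qed
      then show ?thesis using n2 by blast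
    qed
    have BX: "\<And>t. B t l = X t l" using Bnc[OF hlb(2) ncob] by blast
    have XB: "\<And>k. k \<in> {1..m} \<Longrightarrow> h \<le> k \<Longrightarrow> mmult m (minv m T) B k l = B k l"
    proof (rule lemG[OF uV])
      fix k t assume "k \<in> {1..m}" "h \<le> k" "t \<in> {1..m}" "k < t"
      then show "B t l = 0" unfolding BX using XZ by simp
    qed
    show "mmult m (minv m T) B h l \<noteq> 0 \<and>
         (\<forall>k\<in>{1..m}. h < k \<longrightarrow> mmult m (minv m T) B k l = 0)"
    proof
      show "mmult m (minv m T) B h l \<noteq> 0" using XB[of h] hlb XZ unfolding BX by simp
      show "\<forall>k\<in>{1..m}. h < k \<longrightarrow> mmult m (minv m T) B k l = 0"
        using XB XZ unfolding BX by simp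
    qed
  qed
  show "ZZ m (Suc r) (PP \<union> isa_prim m r X P) (mmult m (mmult m (minv m T) X) T)"
    unfolding ZZ_def X' using Z1' Z2' by blast
qed



definition rowid :: "nat \<Rightarrow> nat set \<Rightarrow> ('a::field) mtx \<Rightarrow> bool" where
  "rowid m S A \<longleftrightarrow> (\<forall>a t. a \<notin> S \<longrightarrow> A a t = mid m a t)"

lemma Ts_eq:
  fixes Y :: "('a::field) mtx"
  shows "rca_Ts m r Y j = (\<lambda>a b. mid m a b - (if a = j \<and> b \<in> {j+1..m} then Y (j - r) b / Y (j - r) j else 0))"
proof (intro ext)
  fix a b
  have "(\<Sum>q\<in>{j+1..m}. Y (j - r) q / Y (j - r) j * Umat j q a b)
      = (\<Sum>q\<in>{j+1..m}. if q = b then (if a = j then Y (j - r) b / Y (j - r) j else 0) else 0)"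
    by (rule sum.cong) (auto simp: Umat_def)
  also have "\<dots> = (if a = j \<and> b \<in> {j+1..m} then Y (j - r) b / Y (j - r) j else 0)"
    by (cases "a = j") (simp_all add: sum.delta)
  finally show "rca_Ts m r Y j a b = mid m a b - (if a = j \<and> b \<in> {j+1..m} then Y (j - r) b / Y (j - r) j else 0)"
    unfolding rca_Ts_def by simp
qed

lemma Ts_props:
  fixes Y :: "('a::field) mtx"
  assumes j: "j \<in> {1..m}"
  shows "uu m (rca_Ts m r Y j)" "\<exists>S. isinv m (rca_Ts m r Y j) S \<and> uu m S"
    "rowid m {j} (rca_Ts m r Y j)"
proof -
  define N where "N a b = (if a = j \<and> b \<in> {j+1..m} then Y (j - r) b / Y (j - r) j else 0)" for a b
  have TN: "rca_Ts m r Y j = (\<lambda>a b. mid m a b - N a b)" unfolding Ts_eq N_def by simp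
  have sN: "msupp m N" unfolding msupp_def N_def using j by auto
  have lN: "\<And>a b. b \<le> a \<Longrightarrow> N a b = 0" unfolding N_def by auto
  have NN: "mmult m N N = mzero" unfolding mmult_def mzero_def N_def
    by (intro ext sum.neutral) auto
  show "uu m (rca_Ts m r Y j)" unfolding TN by (rule uu_nil(1)[OF sN lN])
  show "\<exists>S. isinv m (rca_Ts m r Y j) S \<and> uu m S" unfolding TN
    using isinv_nil[OF sN NN] uu_nil(2)[OF sN lN] by blast
  show "rowid m {j} (rca_Ts m r Y j)" unfolding rowid_def TN N_def by auto
qed

lemma rowid_mult:
  fixes A B :: "('a::field) mtx"
  assumes "rowid m S A" "rowid m S' B" shows "rowid m (S \<union> S') (mmult m A B)"
  unfolding rowid_def
proof (intro allI impI)
  fix a t assume a: "a \<notin> S \<union> S'"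
  have "mmult m A B a t = (\<Sum>k\<in>{1..m}. mid m a k * B k t)"
    unfolding mmult_def using assms(1) a unfolding rowid_def by auto
  also have "\<dots> = (if a \<in> {1..m} then B a t else 0)" by (rule sum_mid_left)
  also have "\<dots> = mid m a t" using assms(2) a unfolding rowid_def mid_def by auto
  finally show "mmult m A B a t = mid m a t" .
qed

definition FF :: "nat \<Rightarrow> nat \<Rightarrow> ('a::field) mtx \<Rightarrow> nat list \<Rightarrow> 'a mtx" where
  "FF m r Y ls = foldr (\<lambda>j A. mmult m (rca_Ts m r Y j) A) ls (mid m)"

lemma FF_props:
  fixes Y :: "('a::field) mtx"
  assumes "set ls \<subseteq> {1..m}"
  shows "uu m (FF m r Y ls) \<and> (\<exists>S. isinv m (FF m r Y ls) S \<and> uu m S) \<and> rowid m (set ls) (FF m r Y ls)"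
  using assms
proof (induction ls)
  case Nil
  have "isinv m (mid m) (mid m :: 'a mtx)" unfolding isinv_def using mid_mult[OF msupp_mid] msupp_mid by auto
  then show ?case unfolding FF_def using uu_mid[of m] by (auto simp: rowid_def)
next
  case (Cons j ls)
  have j: "j \<in> {1..m}" using Cons.prems by auto
  have IH: "uu m (FF m r Y ls) \<and> (\<exists>S. isinv m (FF m r Y ls) S \<and> uu m S) \<and> rowid m (set ls) (FF m r Y ls)"
    using Cons by auto
  have FFc: "FF m r Y (j # ls) = mmult m (rca_Ts m r Y j) (FF m r Y ls)" unfolding FF_def by simp
  obtain S1 where S1: "isinv m (rca_Ts m r Y j) S1" "uu m S1" using Ts_props(2)[OF j] by blast
  obtain S2 where S2: "isinv m (FF m r Y ls) S2" "uu m S2" using IH by blast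
  have s1: "msupp m (rca_Ts m r Y j)" using Ts_props(1)[OF j] unfolding uu_def by auto
  have s2: "msupp m (FF m r Y ls)" using IH unfolding uu_def by auto
  have "isinv m (FF m r Y (j # ls)) (mmult m S2 S1)" unfolding FFc
    by (rule isinv_mult[OF S1(1) S2(1) s1 s2])
  moreover have "uu m (mmult m S2 S1)" by (rule uu_mult[OF S2(2) S1(2)])
  moreover have "uu m (FF m r Y (j # ls))" unfolding FFc using uu_mult Ts_props(1)[OF j] IH by blast
  moreover have "rowid m (set (j # ls)) (FF m r Y (j # ls))" unfolding FFc
    using rowid_mult[OF Ts_props(3)[OF j], of "set ls" "FF m r Y ls"] IH by simp
  ultimately show ?case by blast
qed

lemma mult_Ts:
  fixes C Y :: "('a::field) mtx"
  assumes j: "j \<in> {1..m}" and q: "q \<in> {1..m}"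
  shows "mmult m C (rca_Ts m r Y j) x q = C x q - C x j * (if q \<in> {j+1..m} then Y (j - r) q / Y (j - r) j else 0)"
proof -
  have "mmult m C (rca_Ts m r Y j) x q = (\<Sum>k\<in>{1..m}. C x k * mid m k q)
     - (\<Sum>k\<in>{1..m}. C x k * (if k = j \<and> q \<in> {j+1..m} then Y (j - r) q / Y (j - r) j else 0))"
    unfolding mmult_def Ts_eq by (simp add: algebra_simps sum_subtractf)
  also have "(\<Sum>k\<in>{1..m}. C x k * mid m k q) = C x q" using q by (simp only: sum_mid_right) simp
  also have "(\<Sum>k\<in>{1..m}. C x k * (if k = j \<and> q \<in> {j+1..m} then Y (j - r) q / Y (j - r) j else 0))
      = C x j * (if q \<in> {j+1..m} then Y (j - r) q / Y (j - r) j else 0)"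
    by (subst sum_single[where k=j]) (use j in auto)
  finally show ?thesis .
qed

lemma keep:
  fixes C Y :: "('a::field) mtx"
  assumes "set ls \<subseteq> {1..m}" "\<forall>t\<in>set ls. C x t = 0" "q \<in> {1..m}"
  shows "mmult m C (FF m r Y ls) x q = C x q"
  using assms
proof (induction ls arbitrary: C)
  case Nil
  then show ?case unfolding FF_def mmult_def by (simp add: sum_mid_right sum_mid_right')
next
  case (Cons j ls)
  have j: "j \<in> {1..m}" using Cons.prems by auto
  have "mmult m C (FF m r Y (j # ls)) = mmult m (mmult m C (rca_Ts m r Y j)) (FF m r Y ls)"
    unfolding FF_def by (simp add: mmult_assoc)
  moreover have row: "\<And>t. t \<in> {1..m} \<Longrightarrow> mmult m C (rca_Ts m r Y j) x t = C x t"
  proof -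
    fix t assume t: "t \<in> {1..m}"
    have "C x j = 0" using Cons.prems by auto
    then show "mmult m C (rca_Ts m r Y j) x t = C x t" using mult_Ts[OF j t, of C r Y x] by simp
  qed
  moreover have "mmult m (mmult m C (rca_Ts m r Y j)) (FF m r Y ls) x q = mmult m C (rca_Ts m r Y j) x q"
    by (rule Cons.IH) (use Cons.prems row in auto)
  ultimately show ?case using row Cons.prems by simp
qed

lemma clear:
  fixes C Y :: "('a::field) mtx"
  assumes "sorted_wrt (<) ls" "set ls \<subseteq> {1..m}" "\<forall>s\<in>set ls. Y (s - r) s \<noteq> 0"
    "\<forall>s\<in>set ls. \<forall>q\<in>{s..m}. C (s - r) q = Y (s - r) q"
    "\<forall>s\<in>set ls. \<forall>t\<in>set ls. t < s \<longrightarrow> C (s - r) t = 0"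
  shows "\<forall>s\<in>set ls. \<forall>q\<in>{s+1..m}. mmult m C (FF m r Y ls) (s - r) q = 0"
  using assms
proof (induction ls arbitrary: C)
  case Nil
  then show ?case by simp
next
  case (Cons j ls)
  have j: "j \<in> {1..m}" using Cons.prems by auto
  have gt: "\<forall>t\<in>set ls. j < t" using Cons.prems(1) by simp
  define C1 where "C1 = mmult m C (rca_Ts m r Y j)"
  have eq: "mmult m C (FF m r Y (j # ls)) = mmult m C1 (FF m r Y ls)"
    unfolding FF_def C1_def by (simp add: mmult_assoc)
  have C1f: "\<And>x q. q \<in> {1..m} \<Longrightarrow> C1 x q = C x q - C x j * (if q \<in> {j+1..m} then Y (j - r) q / Y (j - r) j else 0)"
    unfolding C1_def by (rule mult_Ts[OF j])
  have jrow: "C1 (j - r) q = 0" if q: "q \<in> {j+1..m}" for q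
  proof -
    have "C (j - r) q = Y (j - r) q" "C (j - r) j = Y (j - r) j" using Cons.prems(4) q j by auto
    moreover have "Y (j - r) j \<noteq> 0" using Cons.prems(3) by auto
    ultimately show ?thesis using C1f[of q "j - r"] q j by auto
  qed
  have other: "\<And>s q. s \<in> set ls \<Longrightarrow> q \<in> {1..m} \<Longrightarrow> C1 (s - r) q = C (s - r) q"
    using C1f Cons.prems(5) gt by auto
  have IH: "\<forall>s\<in>set ls. \<forall>q\<in>{s+1..m}. mmult m C1 (FF m r Y ls) (s - r) q = 0"
  proof (rule Cons.IH)
    show "sorted_wrt (<) ls" using Cons.prems(1) by simp
    show "set ls \<subseteq> {1..m}" using Cons.prems(2) by simp
    show "\<forall>s\<in>set ls. Y (s - r) s \<noteq> 0" using Cons.prems(3) by simp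
    show "\<forall>s\<in>set ls. \<forall>q\<in>{s..m}. C1 (s - r) q = Y (s - r) q"
    proof (intro ballI)
      fix s q assume s: "s \<in> set ls" and q: "q \<in> {s..m}"
      have "q \<in> {1..m}" using q s Cons.prems(2) by auto
      then show "C1 (s - r) q = Y (s - r) q" using other s Cons.prems(4) q by auto
    qed
    show "\<forall>s\<in>set ls. \<forall>t\<in>set ls. t < s \<longrightarrow> C1 (s - r) t = 0"
      using other Cons.prems(5) Cons.prems(2) by auto
  qed
  show ?case
  proof (intro ballI)
    fix s q assume s: "s \<in> set (j # ls)" and q: "q \<in> {s+1..m}"
    show "mmult m C (FF m r Y (j # ls)) (s - r) q = 0"
    proof (cases "s = j")
      case True
      have "mmult m C1 (FF m r Y ls) (j - r) q = C1 (j - r) q"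
      proof (rule keep)
        show "set ls \<subseteq> {1..m}" using Cons.prems(2) by simp
        show "\<forall>t\<in>set ls. C1 (j - r) t = 0"
        proof
          fix t assume t: "t \<in> set ls"
          then have "j < t" "t \<le> m" using gt Cons.prems(2) by auto
          then show "C1 (j - r) t = 0" by (intro jrow) auto
        qed
        show "q \<in> {1..m}" using q True j by auto
      qed
      then show ?thesis using eq jrow q True by simp
    next
      case False
      then show ?thesis using IH s q eq by auto
    qed
  qed
qed



lemma rowzero:
  fixes Y :: "('a::field) mtx"
  assumes r: "1 \<le> r" and V: "validP m r PP" and ZY: "ZZ m r PP Y" and RY: "RR m PP Y"
    and sY: "msupp m Y" and YY: "mmult m Y Y = mzero"
  shows "(g,h) \<in> PP \<Longrightarrow> Y h q = 0"
proof (induction "m - g" arbitrary: g h q rule: less_induct)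
  case less
  have Vb: "\<And>h l. (h,l) \<in> PP \<Longrightarrow> 1 \<le> h \<and> h < l \<and> l \<le> m \<and> l - h < r"
    and Vr: "\<And>h l l'. (h,l) \<in> PP \<Longrightarrow> (h,l') \<in> PP \<Longrightarrow> l = l'"
    using V unfolding validP_def by blast+
  have Z1: "\<And>c k. c \<in> {1..m} \<Longrightarrow> k \<in> {1..m} \<Longrightarrow> freec PP c \<Longrightarrow> c - k < r \<Longrightarrow> Y k c = 0"
    and Z2: "\<And>h l. (h,l) \<in> PP \<Longrightarrow> Y h l \<noteq> 0 \<and> (\<forall>k\<in>{1..m}. h < k \<longrightarrow> Y k l = 0)"
    using ZY unfolding ZZ_def by blast+
  have gh: "1 \<le> g" "g < h" "h \<le> m" "h - g < r" using Vb[OF less.prems] by auto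
  show ?case
  proof (cases "q \<in> {1..m}")
    case False
    then show ?thesis using sY unfolding msupp_def by auto
  next
    case q: True
    have "0 = mmult m Y Y g q" using YY unfolding mzero_def by simp
    also have "mmult m Y Y g q = Y g h * Y h q"
      unfolding mmult_def
    proof (rule sum_single)
      fix k assume k: "k \<in> {1..m}" "k \<noteq> h"
      show "Y g k * Y k q = 0"
      proof (cases "h < k")
        case True
        then have "Y g k = 0" using RY less.prems k unfolding RR_def by blast
        then show ?thesis by simp
      next
        case False
        then have kh: "k < h" using k by simp
        show ?thesis
        proof (cases "freec PP k")
          case True
          have "k - g < r" using kh gh by arith
          then have "Y g k = 0" using Z1[of k g] True k gh by auto
          then show ?thesis by simp
        next
          case False
          then obtain g' where g': "(g',k) \<in> PP" unfolding freec_def by auto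
          have "g' \<noteq> g" using Vr[OF less.prems] g' k by blast
          show ?thesis
          proof (cases "g' < g")
            case True
            then have "Y g k = 0" using Z2[OF g'] gh by auto
            then show ?thesis by simp
          next
            case False
            then have "g < g'" using \<open>g' \<noteq> g\<close> by simp
            moreover have "g' \<le> m" using Vb[OF g'] by auto
            ultimately have "m - g' < m - g" by arith
            then have "Y k q = 0" using less.hyps g' by blast
            then show ?thesis by simp
          qed
        qed
      qed
    qed (use gh in auto)
    finally have "Y g h * Y h q = 0" by simp
    then show ?thesis using Z2[OF less.prems] by simp
  qed
qed

lemma no_newrow:
  fixes Y :: "('a::field) mtx"
  assumes r: "1 \<le> r" and PP: "PP = earlier P r" and V: "validP m r PP" and ZY: "ZZ m r PP Y" and RY: "RR m PP Y"
    and sY: "msupp m Y" and YY: "mmult m Y Y = mzero"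
    and jn: "(j - r, j) \<in> cand m r Y P" and l: "l \<in> {1..m}" and nz: "Y j l \<noteq> 0"
    and below: "\<And>k. k \<in> {1..m} \<Longrightarrow> j < k \<Longrightarrow> Y k l = 0"
  shows False
proof -
  have Z1: "\<And>c k. c \<in> {1..m} \<Longrightarrow> k \<in> {1..m} \<Longrightarrow> freec PP c \<Longrightarrow> c - k < r \<Longrightarrow> Y k c = 0"
    using ZY unfolding ZZ_def by blast+
  have j: "r < j" "j \<le> m" "Y (j - r) j \<noteq> 0" using jn unfolding cand_iff by auto
  have "0 = mmult m Y Y (j - r) l" using YY unfolding mzero_def by simp
  also have "mmult m Y Y (j - r) l = Y (j - r) j * Y j l"
    unfolding mmult_def
  proof (rule sum_single)
    fix k assume k: "k \<in> {1..m}" "k \<noteq> j"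
    show "Y (j - r) k * Y k l = 0"
    proof (cases "j < k")
      case True then show ?thesis using below k by simp
    next
      case False
      then have kj: "k < j" using k by simp
      show ?thesis
      proof (cases "freec PP k")
        case True
        have "k - (j - r) < r" using kj j r by arith
        moreover have "j - r \<in> {1..m}" using j by auto
        ultimately have "Y (j - r) k = 0" using Z1[of k "j - r"] True k by blast
        then show ?thesis by simp
      next
        case False
        then obtain g where "(g,k) \<in> PP" unfolding freec_def by auto
        then have "Y k l = 0" using rowzero[OF r V ZY RY sY YY] by blast
        then show ?thesis by simp
      qed
    qed
  qed (use j in auto)
  finally show False using j nz by simp
qed



lemma rca_step_props:
  fixes Y :: "('a::field) mtx"
  assumes r: "1 \<le> r" and PP: "PP = earlier P r" and V: "validP m r PP" and ZY: "ZZ m r PP Y"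
    and RY: "RR m PP Y" and sY: "msupp m Y" and YY: "mmult m Y Y = mzero"
    and Vn: "validP m (Suc r) (PP \<union> cand m r Y P)"
    and fr: "\<And>i j. (i,j) \<in> cand m r Y P \<Longrightarrow> freer PP i"
  defines "T \<equiv> rca_T m r Y P"
  shows "uu m T" "uu m (minv m T)" "isinv m T (minv m T)"
    "ZZ m (Suc r) (PP \<union> cand m r Y P) (mmult m (mmult m (minv m T) Y) T)"
    "RR m (PP \<union> cand m r Y P) (mmult m (mmult m (minv m T) Y) T)"
    "msupp m (mmult m (mmult m (minv m T) Y) T)"
    "mmult m (mmult m (mmult m (minv m T) Y) T) (mmult m (mmult m (minv m T) Y) T) = mzero"
proof -
  have Vb: "\<And>h l. (h,l) \<in> PP \<Longrightarrow> 1 \<le> h \<and> h < l \<and> l \<le> m \<and> l - h < r"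
    and Vr: "\<And>h l l'. (h,l) \<in> PP \<Longrightarrow> (h,l') \<in> PP \<Longrightarrow> l = l'"
    and Vc: "\<And>h h' l. (h,l) \<in> PP \<Longrightarrow> (h',l) \<in> PP \<Longrightarrow> h = h'"
    using V unfolding validP_def by blast+
  have Vnb: "\<And>h l. (h,l) \<in> PP \<union> cand m r Y P \<Longrightarrow> 1 \<le> h \<and> h < l \<and> l \<le> m \<and> l - h < Suc r"
    using Vn unfolding validP_def by blast
  have Z1: "\<And>c k. c \<in> {1..m} \<Longrightarrow> k \<in> {1..m} \<Longrightarrow> freec PP c \<Longrightarrow> c - k < r \<Longrightarrow> Y k c = 0"
    and Z2: "\<And>h l. (h,l) \<in> PP \<Longrightarrow> Y h l \<noteq> 0 \<and> (\<forall>k\<in>{1..m}. h < k \<longrightarrow> Y k l = 0)"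
    using ZY unfolding ZZ_def by blast+
  have R: "\<And>h l q. (h,l) \<in> PP \<Longrightarrow> q \<in> {1..m} \<Longrightarrow> l < q \<Longrightarrow> Y h q = 0"
    using RY unfolding RR_def by blast
  define new where "new = cand m r Y P"
  have newI: "\<And>i j. (i,j) \<in> new \<longleftrightarrow> r < j \<and> j \<le> m \<and> i = j - r \<and> Y i j \<noteq> 0 \<and> freec PP j"
    unfolding new_def cand_iff PP by (rule refl)
  define JS where "JS = snd ` new"
  have JSI: "s \<in> JS \<longleftrightarrow> (s - r, s) \<in> new" for s
  proof
    assume "s \<in> JS"
    then obtain x where x: "x \<in> new" "s = snd x" unfolding JS_def by auto
    obtain i j where "x = (i,j)" by (cases x)
    then show "(s - r, s) \<in> new" using x newI by auto
  next
    assume "(s - r, s) \<in> new"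
    then show "s \<in> JS" unfolding JS_def by force
  qed
  have finJ: "finite JS"
  proof -
    have "JS \<subseteq> {..m}" unfolding JS_def using newI by auto
    then show ?thesis using finite_subset by blast
  qed
  define js where "js = sorted_list_of_set JS"
  have setjs: "set js = JS" unfolding js_def using finJ by simp
  have sjs: "sorted_wrt (<) js" unfolding js_def by (rule strict_sorted_list_of_set)
  have JSm: "JS \<subseteq> {1..m}" using JSI newI by auto
  have TF: "T = FF m r Y js" unfolding T_def rca_T_def FF_def js_def JS_def new_def by simp
  have FP: "uu m T \<and> (\<exists>S. isinv m T S \<and> uu m S) \<and> rowid m JS T"
    unfolding TF using FF_props[of js m r Y] setjs JSm by simp
  then obtain S where S: "isinv m T S" "uu m S" by blast
  have uT: "uu m T" and rT: "rowid m JS T" using FP by auto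
  have sT: "msupp m T" using uT unfolding uu_def by auto
  have mS: "minv m T = S" by (rule minv_eq[OF sT S(1)])
  show "uu m T" by (rule uT)
  show uV: "uu m (minv m T)" unfolding mS by (rule S(2))
  show "isinv m T (minv m T)" unfolding mS by (rule S(1))
  have sV: "msupp m S" using S unfolding isinv_def by auto
  have lT: "\<And>a b. b < a \<Longrightarrow> T a b = 0" and dT: "\<And>a. a \<in> {1..m} \<Longrightarrow> T a a = 1"
    using uT unfolding uu_def by auto
  have rS: "S a c = mid m a c" if a: "a \<notin> JS" for a c
  proof (cases "a \<in> {1..m}")
    case True
    have "mid m a c = mmult m T S a c" using S unfolding isinv_def by simp
    also have "\<dots> = (\<Sum>k\<in>{1..m}. mid m a k * S k c)"
      unfolding mmult_def using rT a unfolding rowid_def by simp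
    also have "\<dots> = S a c" by (simp only: sum_mid_left) (use True in simp)
    finally show ?thesis by simp
  next
    case False
    then show ?thesis using sV unfolding msupp_def mid_def by auto
  qed
  define B where "B = mmult m Y T"
  have Y': "mmult m (mmult m (minv m T) Y) T = mmult m S B" unfolding B_def mS by (simp add: mmult_assoc)
  have Bcol: "B k c = Y k c" if c: "c \<in> {1..m}" and h: "\<And>s. s \<in> JS \<Longrightarrow> s < c \<Longrightarrow> Y k s = 0" for k c
  proof -
    have "B k c = Y k c * T c c"
      unfolding B_def mmult_def
    proof (rule sum_single)
      fix t assume t: "t \<in> {1..m}" "t \<noteq> c"
      show "Y k t * T t c = 0"
      proof (cases "t \<in> JS")
        case False
        then show ?thesis using rT t unfolding rowid_def mid_def by auto
      next
        case True
        show ?thesis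
        proof (cases "t < c")
          case True then show ?thesis using h \<open>t \<in> JS\<close> by simp
        next
          case False then show ?thesis using lT t by simp
        qed
      qed
    qed (use c in auto)
    then show ?thesis using dT c by simp
  qed
  have Bclear: "B i q = 0" if ij: "(i,j) \<in> new" and q: "q \<in> {j+1..m}" for i j q
  proof -
    have "\<forall>s\<in>set js. \<forall>q\<in>{s+1..m}. mmult m Y (FF m r Y js) (s - r) q = 0"
    proof (rule clear[OF sjs])
      show "set js \<subseteq> {1..m}" using setjs JSm by simp
      show "\<forall>s\<in>set js. Y (s - r) s \<noteq> 0" using setjs JSI newI by auto
      show "\<forall>s\<in>set js. \<forall>q\<in>{s..m}. Y (s - r) q = Y (s - r) q" by simp
      show "\<forall>s\<in>set js. \<forall>t\<in>set js. t < s \<longrightarrow> Y (s - r) t = 0"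
      proof (intro ballI impI)
        fix s t assume s: "s \<in> set js" and t: "t \<in> set js" and ts: "t < s"
        have sn: "r < s" "s \<le> m" using s setjs JSI newI by auto
        have tn: "freec PP t" "t \<in> {1..m}" using t setjs JSI newI by auto
        have "t - (s - r) < r" using ts sn r by arith
        moreover have "s - r \<in> {1..m}" using sn by auto
        ultimately show "Y (s - r) t = 0" using Z1 tn by blast
      qed
    qed
    moreover have "j \<in> set js" using ij setjs JSI newI by auto
    moreover have "i = j - r" using ij newI by auto
    ultimately show ?thesis using q unfolding B_def TF by blast
  qed
  have Srow: "mmult m S B k c = B k c" if k: "k \<in> {1..m}" "k \<notin> JS" for k c
  proof -
    have "mmult m S B k c = (\<Sum>t\<in>{1..m}. mid m k t * B t c)" unfolding mmult_def using rS k by simp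
    also have "\<dots> = B k c" by (simp only: sum_mid_left) (use k in simp)
    finally show ?thesis .
  qed
  have notJ: "h \<notin> JS" if hl: "(h,l) \<in> PP \<union> new" for h l
  proof
    assume hJ: "h \<in> JS"
    then have hn: "(h - r, h) \<in> cand m r Y P" using JSI unfolding new_def by simp
    show False using hl
    proof (elim UnE)
      assume hl: "(h,l) \<in> PP"
      show False
      proof (rule no_newrow[OF r PP V ZY RY sY YY hn])
        show "l \<in> {1..m}" "Y h l \<noteq> 0" using Vb[OF hl] Z2[OF hl] by auto
        show "\<And>k. k \<in> {1..m} \<Longrightarrow> h < k \<Longrightarrow> Y k l = 0" using Z2[OF hl] by auto
      qed
    next
      assume hl: "(h,l) \<in> new"
      then have hl2: "r < l" "l \<le> m" "h = l - r" "Y h l \<noteq> 0" "freec PP l" using newI by auto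
      show False
      proof (rule no_newrow[OF r PP V ZY RY sY YY hn])
        show "l \<in> {1..m}" "Y h l \<noteq> 0" using hl2 by auto
        show "\<And>k. k \<in> {1..m} \<Longrightarrow> h < k \<Longrightarrow> Y k l = 0"
        proof -
          fix k assume k: "k \<in> {1..m}" "h < k"
          then have "l - k < r" using hl2 r by arith
          then show "Y k l = 0" using Z1 hl2 k by auto
        qed
      qed
    qed
  qed
  have Z1': "\<forall>c k. c \<in> {1..m} \<longrightarrow> k \<in> {1..m} \<longrightarrow> freec (PP \<union> new) c \<longrightarrow> c - k < Suc r \<longrightarrow> mmult m S B k c = 0"
  proof (intro allI impI)
    fix c k assume c: "c \<in> {1..m}" and k: "k \<in> {1..m}" and fc: "freec (PP \<union> new) c" and ck: "c - k < Suc r"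
    have fc0: "freec PP c" using fc unfolding freec_def by auto
    have allB: "B t c = 0" if t: "t \<in> {1..m}" "c - t < Suc r" for t
    proof -
      have "B t c = Y t c"
      proof (rule Bcol[OF c])
        fix s assume s: "s \<in> JS" "s < c"
        have sf: "freec PP s" "s \<in> {1..m}" using s JSI newI by auto
        have "s - t < r" using s t r by arith
        then show "Y t s = 0" using Z1 sf t by blast
      qed
      moreover have "Y t c = 0"
      proof (cases "c - t < r")
        case True then show ?thesis using Z1 c t fc0 by blast
      next
        case False
        then have "t = c - r \<and> r < c" using t r by (simp; arith)
        moreover have "(c - r, c) \<notin> new" using fc unfolding freec_def by auto
        ultimately show ?thesis using newI c fc0 by auto
      qed
      ultimately show ?thesis by simp
    qed
    have "mmult m S B k c = B k c"
    proof (rule lemG[OF S(2) k])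
      fix t assume t: "t \<in> {1..m}" "k < t"
      then have "c - t < Suc r" using ck by arith
      then show "B t c = 0" using allB t by blast
    qed
    then show "mmult m S B k c = 0" using allB[OF k ck] by simp
  qed
  have Z2': "\<forall>h l. (h,l) \<in> PP \<union> new \<longrightarrow> mmult m S B h l \<noteq> 0 \<and>
         (\<forall>k\<in>{1..m}. h < k \<longrightarrow> mmult m S B k l = 0)"
  proof (intro allI impI)
    fix h l assume hl: "(h,l) \<in> PP \<union> new"
    have hlb: "1 \<le> h" "h < l" "l \<le> m" "l - h < Suc r" using Vnb hl unfolding new_def by auto
    have YZ: "Y h l \<noteq> 0 \<and> (\<forall>k\<in>{1..m}. h < k \<longrightarrow> Y k l = 0)"
    proof (cases "(h,l) \<in> PP")
      case True then show ?thesis using Z2 by blast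
    next
      case False
      then have n2: "r < l" "l \<le> m" "h = l - r" "Y h l \<noteq> 0" "freec PP l" using hl newI by auto
      have "\<forall>k\<in>{1..m}. h < k \<longrightarrow> Y k l = 0"
      proof (intro ballI impI)
        fix k assume k: "k \<in> {1..m}" "h < k"
        then have "l - k < r" using n2 r by arith
        then show "Y k l = 0" using Z1[of l k] k n2 by simp
      qed
      then show ?thesis using n2 by blast
    qed
    have BY: "B t l = Y t l" if t: "t \<in> {1..m}" "h \<le> t" for t
    proof (rule Bcol)
      show "l \<in> {1..m}" using hlb by auto
      fix s assume s: "s \<in> JS" "s < l"
      have sf: "freec PP s" "s \<in> {1..m}" using s JSI newI by auto
      have "s - t < r" using s t hlb r by arith
      then show "Y t s = 0" using Z1 sf t by blast
    qed
    have XB: "\<And>k. k \<in> {1..m} \<Longrightarrow> h \<le> k \<Longrightarrow> mmult m S B k l = B k l"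
    proof (rule lemG[OF S(2)])
      fix k t assume "k \<in> {1..m}" "h \<le> k" "t \<in> {1..m}" "k < t"
      then show "B t l = 0" using BY YZ by simp
    qed
    show "mmult m S B h l \<noteq> 0 \<and> (\<forall>k\<in>{1..m}. h < k \<longrightarrow> mmult m S B k l = 0)"
    proof
      show "mmult m S B h l \<noteq> 0" using XB[of h] BY[of h] hlb YZ by simp
      show "\<forall>k\<in>{1..m}. h < k \<longrightarrow> mmult m S B k l = 0"
        using XB BY YZ by simp
    qed
  qed
  show "ZZ m (Suc r) (PP \<union> cand m r Y P) (mmult m (mmult m (minv m T) Y) T)"
    unfolding ZZ_def Y' using Z1' Z2' unfolding new_def by blast
  have RR': "\<forall>h l q. (h,l) \<in> PP \<union> new \<longrightarrow> q \<in> {1..m} \<longrightarrow> l < q \<longrightarrow> mmult m S B h q = 0"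
  proof (intro allI impI)
    fix h l q assume hl: "(h,l) \<in> PP \<union> new" and q: "q \<in> {1..m}" and lq: "l < q"
    have hlb: "1 \<le> h" "h < l" "l \<le> m" using Vnb hl unfolding new_def by auto
    have "mmult m S B h q = B h q" using Srow[of h q] notJ[OF hl] hlb by simp
    also have "B h q = 0"
      using hl
    proof (elim UnE)
      assume hl: "(h,l) \<in> PP"
      have "B h q = Y h q"
      proof (rule Bcol[OF q])
        fix s assume s: "s \<in> JS" "s < q"
        have sf: "freec PP s" "s \<in> {1..m}" using s JSI newI by auto
        have "s \<noteq> l" using sf hl unfolding freec_def by auto
        show "Y h s = 0"
        proof (cases "l < s")
          case True then show ?thesis using R[OF hl] sf by blast
        next
          case False
          then have "s < l" using \<open>s \<noteq> l\<close> by simp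
          then have "s - h < r" using Vb[OF hl] by arith
          then show ?thesis using Z1 sf hlb by auto
        qed
      qed
      also have "Y h q = 0" using R[OF hl q lq] .
      finally show ?thesis .
    next
      assume "(h,l) \<in> new"
      then show ?thesis using Bclear q lq hlb by auto
    qed
    finally show "mmult m S B h q = 0" .
  qed
  show "RR m (PP \<union> cand m r Y P) (mmult m (mmult m (minv m T) Y) T)"
    unfolding RR_def Y' using RR' unfolding new_def by blast
  show "msupp m (mmult m (mmult m (minv m T) Y) T)"
    unfolding mS by (intro msupp_mult sV sY sT)
  have "mmult m (mmult m (mmult m S Y) T) (mmult m (mmult m S Y) T)
      = mmult m S (mmult m Y (mmult m (mmult m T S) (mmult m Y T)))"
    by (simp add: mmult_assoc)
  also have "\<dots> = mmult m S (mmult m (mmult m Y Y) T)"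
    using S(1) unfolding isinv_def by (simp add: mid_mult msupp_mult sY sT mmult_assoc)
  also have "\<dots> = mzero" using YY by (simp add: mult_zero_l mult_zero_r)
  finally show "mmult m (mmult m (mmult m (minv m T) Y) T) (mmult m (mmult m (minv m T) Y) T) = mzero"
    unfolding mS .
qed



lemma isa_Suc: "1 \<le> r \<Longrightarrow> isa m D (Suc r) = isa_step m r (fst (isa m D r)) (snd (isa m D r))"
  by (cases r) (auto split: prod.splits)

lemma rca_Suc: "1 \<le> r \<Longrightarrow> rca m D (Suc r) = rca_step m r (fst (rca m D r)) (snd (rca m D r))"
  by (cases r) (auto split: prod.splits)

lemma earlier_upd: "1 \<le> r \<Longrightarrow> earlier (P(r := S)) (Suc r) = earlier P r \<union> S"
proof -
  assume r: "1 \<le> r"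
  have "{1..<Suc r} = insert r {1..<r}" using r by auto
  then show ?thesis unfolding earlier_def by auto
qed

lemma upto_upd: "1 \<le> r \<Longrightarrow> (\<Union>k\<in>{1..r}. (P(r := S)) k) = earlier P r \<union> S"
proof -
  assume r: "1 \<le> r"
  have "{1..r} = insert r {1..<r}" using r by auto
  then show ?thesis unfolding earlier_def by auto
qed

lemma cancel1: fixes T S Z :: "('a::field) mtx" shows "isinv m T S \<Longrightarrow> msupp m Z \<Longrightarrow> mmult m T (mmult m S Z) = Z"
  unfolding isinv_def by (metis mid_mult mmult_assoc)

lemma cancel2: fixes T S Z :: "('a::field) mtx" shows "isinv m T S \<Longrightarrow> msupp m Z \<Longrightarrow> mmult m S (mmult m T Z) = Z"
  unfolding isinv_def by (metis mid_mult mmult_assoc)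

definition INV :: "nat \<Rightarrow> ('a::field) mtx \<Rightarrow> nat \<Rightarrow> bool" where
  "INV m D r \<longleftrightarrow> snd (rca m D r) = snd (isa m D r) \<and>
     validP m r (earlier (snd (isa m D r)) r) \<and>
     ZZ m r (earlier (snd (isa m D r)) r) (fst (isa m D r)) \<and>
     ZZ m r (earlier (snd (isa m D r)) r) (fst (rca m D r)) \<and>
     RR m (earlier (snd (isa m D r)) r) (fst (rca m D r)) \<and>
     msupp m (fst (isa m D r)) \<and> msupp m (fst (rca m D r)) \<and>
     mmult m (fst (rca m D r)) (fst (rca m D r)) = mzero \<and>
     (\<exists>U. uu m U \<and> mmult m (fst (rca m D r)) U = mmult m U (fst (isa m D r)))"

lemma INV_base:
  fixes D :: "('a::field) mtx"
  assumes "connection_matrix m D J b"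
  shows "INV m D 1"
proof -
  have cm: "(\<Union>k\<in>{0..b}. J k) = {1..m}" "mmult m D D = mzero"
    "\<And>i j. D i j \<noteq> 0 \<Longrightarrow> i < j \<and> (\<exists>k\<in>{1..b}. i \<in> J (k - 1) \<and> j \<in> J k)"
    using assms unfolding connection_matrix_def by blast+
  have sD: "msupp m D"
    unfolding msupp_def
  proof (intro allI impI)
    fix a c assume ac: "\<not> (a \<in> {1..m} \<and> c \<in> {1..m})"
    show "D a c = 0"
    proof (rule ccontr)
      assume "D a c \<noteq> 0"
      then obtain k where k: "k \<in> {1..b}" "a \<in> J (k - 1)" "c \<in> J k" using cm(3) by blast
      then have "a \<in> (\<Union>k\<in>{0..b}. J k)" "c \<in> (\<Union>k\<in>{0..b}. J k)" by (auto intro: bexI[of _ "k - 1"])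
      then show False using ac cm(1) by auto
    qed
  qed
  have e: "earlier (\<lambda>_. {}) 1 = {}" unfolding earlier_def by simp
  have Z: "ZZ m 1 {} D" unfolding ZZ_def
  proof (intro conjI allI impI)
    fix c k :: nat assume "c - k < 1"
    then have "\<not> k < c" by simp
    then show "D k c = 0" using cm(3) by blast
  qed auto
  have U: "mmult m D (mid m) = mmult m (mid m) D" using mid_mult[OF sD] mult_mid[OF sD] by simp
  have i1: "isa m D 1 = (D, \<lambda>_. {})" by (simp add: One_nat_def)
  have r1: "rca m D 1 = (D, \<lambda>_. {})" by (simp add: One_nat_def)
  have v: "validP m 1 {}" unfolding validP_def by simp
  have rr: "RR m {} D" unfolding RR_def by simp
  show ?thesis unfolding INV_def i1 r1 fst_conv snd_conv e using Z U sD cm(2) uu_mid[of m] v rr by blast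
qed

lemma INV_step:
  fixes D :: "('a::field) mtx"
  assumes r: "1 \<le> r" and rm: "Suc r \<le> m - 1" and I: "INV m D r"
  shows "INV m D (Suc r)"
proof -
  define X where "X = fst (isa m D r)"
  define Y where "Y = fst (rca m D r)"
  define P where "P = snd (isa m D r)"
  define PP where "PP = earlier P r"
  have PY: "snd (rca m D r) = P" and V: "validP m r PP" and ZX: "ZZ m r PP X" and ZY: "ZZ m r PP Y"
    and RY: "RR m PP Y" and sX: "msupp m X" and sY: "msupp m Y" and YY: "mmult m Y Y = mzero"
    using I unfolding INV_def X_def Y_def P_def PP_def by auto
  obtain U where U: "uu m U" "mmult m Y U = mmult m U X" using I unfolding INV_def X_def Y_def by auto
  have eq: "isa_prim m r X P = cand m r Y P" by (rule concl(1)[OF r PP_def V ZX ZY RY U])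
  define new where "new = cand m r Y P"
  define T where "T = isa_T m r X P"
  define T2 where "T2 = rca_T m r Y P"
  have rle: "r \<le> m - 2" using rm by arith
  have isaS: "isa m D (Suc r) = (mmult m (mmult m (minv m T) X) T, P(r := new))"
    using isa_Suc[OF r, of m D] eq unfolding isa_step_def X_def P_def T_def new_def Let_def by simp
  have rcaS: "rca m D (Suc r) = (mmult m (mmult m (minv m T2) Y) T2, P(r := new))"
    using rca_Suc[OF r, of m D] rle PY unfolding rca_step_def Y_def P_def T2_def new_def Let_def by simp
  have earl: "earlier (P(r := new)) (Suc r) = PP \<union> new" unfolding PP_def by (rule earlier_upd[OF r])
  have Vn: "validP m (Suc r) (PP \<union> new)" using validP_step[OF r PP_def V, of X] eq new_def by simp
  have fr: "freer PP i" if ij: "(i,j) \<in> cand m r Y P" for i j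
  proof -
    have "(i,j) \<in> isa_prim m r X P" using ij eq by simp
    then show "freer PP i" unfolding prim_iff PP_def by blast
  qed
  note IS = isa_step_props[OF r PP_def V ZX sX, folded T_def]
  note RS = rca_step_props[OF r PP_def V ZY RY sY YY Vn[unfolded new_def] fr, folded T2_def]
  define X' where "X' = mmult m (mmult m (minv m T) X) T"
  define Y' where "Y' = mmult m (mmult m (minv m T2) Y) T2"
  define U' where "U' = mmult m (mmult m (minv m T2) U) T"
  have sT: "msupp m T" and sT2: "msupp m T2" and sU: "msupp m U"
    using IS(1) RS(1) U(1) unfolding uu_def by auto
  have sV: "msupp m (minv m T)" and sV2: "msupp m (minv m T2)"
    using IS(3) RS(3) unfolding isinv_def by auto
  have uU': "uu m U'" unfolding U'_def by (intro uu_mult RS(2) U(1) IS(1))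
  have YU': "\<And>Z. mmult m Y (mmult m U Z) = mmult m U (mmult m X Z)"
    using U(2) by (metis mmult_assoc)
  have "mmult m Y' U' = mmult m (minv m T2) (mmult m Y (mmult m T2 (mmult m (minv m T2) (mmult m U T))))"
    unfolding Y'_def U'_def by (simp add: mmult_assoc)
  also have "\<dots> = mmult m (minv m T2) (mmult m Y (mmult m U T))"
    using cancel1[OF RS(3), where Z="mmult m U T"] msupp_mult[OF sU sT] by simp
  also have "\<dots> = mmult m (minv m T2) (mmult m U (mmult m X T))" using YU' by simp
  finally have L: "mmult m Y' U' = mmult m (minv m T2) (mmult m U (mmult m X T))" .
  have "mmult m U' X' = mmult m (minv m T2) (mmult m U (mmult m T (mmult m (minv m T) (mmult m X T))))"
    unfolding X'_def U'_def by (simp add: mmult_assoc)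
  also have "\<dots> = mmult m (minv m T2) (mmult m U (mmult m X T))"
    using cancel1[OF IS(3), where Z="mmult m X T"] msupp_mult[OF sX sT] by simp
  finally have R: "mmult m U' X' = mmult m (minv m T2) (mmult m U (mmult m X T))" .
  have snds: "snd (rca m D (Suc r)) = snd (isa m D (Suc r))" using isaS rcaS by simp
  have fi: "fst (isa m D (Suc r)) = X'" using isaS unfolding X'_def by simp
  have fr2: "fst (rca m D (Suc r)) = Y'" using rcaS unfolding Y'_def by simp
  have ei: "earlier (snd (isa m D (Suc r))) (Suc r) = PP \<union> new" using isaS earl by simp
  have c1: "validP m (Suc r) (PP \<union> new)" by (rule Vn)
  have c2: "ZZ m (Suc r) (PP \<union> new) X'" using IS(4) eq unfolding X'_def new_def by simp
  have c3: "ZZ m (Suc r) (PP \<union> new) Y'" using RS(4) unfolding Y'_def new_def by simp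
  have c4: "RR m (PP \<union> new) Y'" using RS(5) unfolding Y'_def new_def by simp
  have c5: "msupp m X'" using IS(5) unfolding X'_def by simp
  have c6: "msupp m Y'" using RS(6) unfolding Y'_def by simp
  have c7: "mmult m Y' Y' = mzero" using RS(7) unfolding Y'_def by simp
  have c8: "\<exists>U. uu m U \<and> mmult m Y' U = mmult m U X'" using uU' L R by metis
  show ?thesis
    unfolding INV_def snds fi fr2 ei using c1 c2 c3 c4 c5 c6 c7 c8 by blast
qed

lemma INV_all:
  fixes D :: "('a::field) mtx"
  assumes "connection_matrix m D J b"
  shows "1 \<le> r \<Longrightarrow> r \<le> m - 1 \<Longrightarrow> INV m D r"
proof (induction r rule: dec_induct[of 1, case_names base step, consumes 1])
  case base then show ?case using INV_base[OF assms] by simp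
next
  case (step n) then show ?case using INV_step by simp
qed



theorem mainTheorem15:
  fixes m b :: nat and D :: "('a::field) mtx" and J :: "nat \<Rightarrow> nat set"
  assumes "m \<ge> 1"
    and "connection_matrix m D J b"
  shows "\<forall>r\<in>{1..m-1}.
           snd (isa m D (Suc r)) r = snd (rca m D (Suc r)) r \<and>
           (\<forall>i j. (i, j) \<in> (\<Union>k\<in>{1..r}. snd (isa m D (Suc r)) k) \<longrightarrow>
                   fst (isa m D r) i j = fst (rca m D r) i j)"
proof (intro ballI)
  fix r assume rr: "r \<in> {1..m-1}"
  then have r: "1 \<le> r" by simp
  have I: "INV m D r" using INV_all[OF assms(2)] rr by simp
  define X where "X = fst (isa m D r)"
  define Y where "Y = fst (rca m D r)"
  define P where "P = snd (isa m D r)"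
  define PP where "PP = earlier P r"
  have PY: "snd (rca m D r) = P" and V: "validP m r PP" and ZX: "ZZ m r PP X" and ZY: "ZZ m r PP Y"
    and RY: "RR m PP Y"
    using I unfolding INV_def X_def Y_def P_def PP_def by auto
  obtain U where U: "uu m U" "mmult m Y U = mmult m U X" using I unfolding INV_def X_def Y_def by auto
  have eq: "isa_prim m r X P = cand m r Y P" by (rule concl(1)[OF r PP_def V ZX ZY RY U])
  have vals: "\<And>i j. (i,j) \<in> PP \<union> isa_prim m r X P \<Longrightarrow> X i j = Y i j"
    by (rule concl(2)[OF r PP_def V ZX ZY RY U])
  have si: "snd (isa m D (Suc r)) = P(r := isa_prim m r X P)"
    using isa_Suc[OF r, of m D] unfolding isa_step_def X_def P_def Let_def by simp
  have sr: "snd (rca m D (Suc r)) = P(r := cand m r Y P)"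
    using rca_Suc[OF r, of m D] PY unfolding rca_step_def Y_def P_def Let_def by simp
  have un: "(\<Union>k\<in>{1..r}. snd (isa m D (Suc r)) k) = PP \<union> isa_prim m r X P"
    unfolding si PP_def by (rule upto_upd[OF r])
  show "snd (isa m D (Suc r)) r = snd (rca m D (Suc r)) r \<and>
           (\<forall>i j. (i, j) \<in> (\<Union>k\<in>{1..r}. snd (isa m D (Suc r)) k) \<longrightarrow>
                   fst (isa m D r) i j = fst (rca m D r) i j)"
    unfolding un using si sr eq vals unfolding X_def Y_def by simp
qed


end
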